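(* Let $k\in\mathbb N^*$, $\alpha\in\mathbb R$, $\kappa>0$ and let $(\mathbf G,\mathcal D(\mathbf G),\mathcal H)$ be the closure of $\mathbf G=-i(\mathbf L\mathbf b^\dagger+\mathbf L^\dagger\mathbf b)-\frac\kappa2\mathbf b^\dagger\mathbf b$ defined on $\mathcal H^{2k,2}$, where $\mathbf L=\mathbf a^k-\alpha^k\mathbf 1$. Then $\mathcal H^{2k,2k}$ is $\mathbf G$-admissible: it is invariant under the contraction semigroup $(e^{t\mathbf G})_{t\ge0}$ generated by $\mathbf G$, and the restriction of this semigroup to $\mathcal H^{2k,2k}$ is a strongly continuous semigroup on $\mathcal H^{2k,2k}$ equipped with its own norm.
   Context: $\mathcal H_a,\mathcal H_b$ are copies of $L^2(\mathbb R,\mathbb C)$, $\mathcal H=\mathcal H_a\otimes\mathcal H_b$ with Fock basis $|n\rangle\otimes|m\rangle$; $\mathbf a,\mathbf b$ are the annihilation operators on the two factors. For $p,q\in\mathbb R$, $\mathcal H^{p,q}=\{\sum_{n,m}\psi_{n,m}|n\rangle\otimes|m\rangle : \sum_{n,m}(1+n^p+m^q)|\psi_{n,m}|^2<\infty\}$ with the inner product $\langle u|v\rangle_{\mathcal H^{p,q}}=\sum(1+n^p+m^q)\overline{u_{n,m}}v_{n,m}$. The closure of $\mathbf G$ generates a strongly continuous contraction semigroup on $\mathcal H$. *)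

theory Defs
  imports "HOL-Analysis.Analysis"
begin

text \<open>Vectors of \<open>H = H_a \<otimes> H_b\<close> are represented by their coefficient functions
  in the Fock basis \<open>|n\<rangle> \<otimes> |m\<rangle>\<close>, i.e. by functions \<open>nat \<times> nat \<Rightarrow> complex\<close>.\<close>

type_synonym fock = "nat \<times> nat \<Rightarrow> complex"

definition wsum :: "(nat \<times> nat \<Rightarrow> real) \<Rightarrow> fock \<Rightarrow> real" where
  "wsum w \<psi> = (\<Sum>\<^sub>\<infinity>x\<in>UNIV. w x * (cmod (\<psi> x))\<^sup>2)"

definition Hspace :: "fock set" where
  "Hspace = {\<psi>. (\<lambda>x. (cmod (\<psi> x))\<^sup>2) summable_on UNIV}"

definition Hnorm :: "fock \<Rightarrow> real" where
  "Hnorm \<psi> = sqrt (wsum (\<lambda>_. 1) \<psi>)"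

definition wpq :: "nat \<Rightarrow> nat \<Rightarrow> nat \<times> nat \<Rightarrow> real" where
  "wpq p q x = 1 + real (fst x) ^ p + real (snd x) ^ q"

definition Hpq :: "nat \<Rightarrow> nat \<Rightarrow> fock set" where
  "Hpq p q = {\<psi>. (\<lambda>x. wpq p q x * (cmod (\<psi> x))\<^sup>2) summable_on UNIV}"

definition Hpq_norm :: "nat \<Rightarrow> nat \<Rightarrow> fock \<Rightarrow> real" where
  "Hpq_norm p q \<psi> = sqrt (wsum (wpq p q) \<psi>)"

definition op_a :: "fock \<Rightarrow> fock" where
  "op_a \<psi> = (\<lambda>(n, m). complex_of_real (sqrt (real (n + 1))) * \<psi> (n + 1, m))"

definition op_adag :: "fock \<Rightarrow> fock" where
  "op_adag \<psi> = (\<lambda>(n, m). if n = 0 then 0 else complex_of_real (sqrt (real n)) * \<psi> (n - 1, m))"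

definition op_b :: "fock \<Rightarrow> fock" where
  "op_b \<psi> = (\<lambda>(n, m). complex_of_real (sqrt (real (m + 1))) * \<psi> (n, m + 1))"

definition op_bdag :: "fock \<Rightarrow> fock" where
  "op_bdag \<psi> = (\<lambda>(n, m). if m = 0 then 0 else complex_of_real (sqrt (real m)) * \<psi> (n, m - 1))"

definition op_L :: "nat \<Rightarrow> real \<Rightarrow> fock \<Rightarrow> fock" where
  "op_L k \<alpha> \<psi> = (\<lambda>x. (op_a ^^ k) \<psi> x - complex_of_real (\<alpha> ^ k) * \<psi> x)"

definition op_Ldag :: "nat \<Rightarrow> real \<Rightarrow> fock \<Rightarrow> fock" where
  "op_Ldag k \<alpha> \<psi> = (\<lambda>x. (op_adag ^^ k) \<psi> x - complex_of_real (\<alpha> ^ k) * \<psi> x)"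

text \<open>\<open>G = -i (L b\<^sup>\<dagger> + L\<^sup>\<dagger> b) - \<kappa>/2 b\<^sup>\<dagger> b\<close>, meant on the domain \<open>H^{2k,2}\<close>.\<close>
definition op_G :: "nat \<Rightarrow> real \<Rightarrow> real \<Rightarrow> fock \<Rightarrow> fock" where
  "op_G k \<alpha> \<kappa> \<psi> = (\<lambda>x. - \<i> * (op_L k \<alpha> (op_bdag \<psi>) x + op_Ldag k \<alpha> (op_b \<psi>) x)
                        - complex_of_real (\<kappa> / 2) * op_bdag (op_b \<psi>) x)"

definition closure_graph :: "fock set \<Rightarrow> (fock \<Rightarrow> fock) \<Rightarrow> (fock \<times> fock) set" where
  "closure_graph D A = {(\<psi>, \<phi>). \<psi> \<in> Hspace \<and> \<phi> \<in> Hspace \<and>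
      (\<exists>s. (\<forall>j. s j \<in> D) \<and>
           (\<lambda>j. Hnorm (\<lambda>x. s j x - \<psi> x)) \<longlonglongrightarrow> 0 \<and>
           (\<lambda>j. Hnorm (\<lambda>x. A (s j) x - \<phi> x)) \<longlonglongrightarrow> 0)}"

definition C0_contraction_semigroup :: "(real \<Rightarrow> fock \<Rightarrow> fock) \<Rightarrow> bool" where
  "C0_contraction_semigroup T \<longleftrightarrow>
     (\<forall>t\<ge>0. \<forall>\<psi>\<in>Hspace. T t \<psi> \<in> Hspace) \<and>
     (\<forall>t\<ge>0. \<forall>\<psi>\<in>Hspace. \<forall>\<phi>\<in>Hspace. \<forall>c.
        T t (\<lambda>x. c * \<psi> x + \<phi> x) = (\<lambda>x. c * T t \<psi> x + T t \<phi> x)) \<and>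
     (\<forall>\<psi>\<in>Hspace. T 0 \<psi> = \<psi>) \<and>
     (\<forall>s\<ge>0. \<forall>t\<ge>0. \<forall>\<psi>\<in>Hspace. T (s + t) \<psi> = T s (T t \<psi>)) \<and>
     (\<forall>t\<ge>0. \<forall>\<psi>\<in>Hspace. Hnorm (T t \<psi>) \<le> Hnorm \<psi>) \<and>
     (\<forall>\<psi>\<in>Hspace. \<forall>t\<ge>0.
        ((\<lambda>s. Hnorm (\<lambda>x. T s \<psi> x - T t \<psi> x)) \<longlongrightarrow> 0) (at t within {0..}))"

definition generator_graph :: "(real \<Rightarrow> fock \<Rightarrow> fock) \<Rightarrow> (fock \<times> fock) set \<Rightarrow> bool" where
  "generator_graph T Gr \<longleftrightarrow>
     (\<forall>\<psi> \<phi>. (\<psi>, \<phi>) \<in> Gr \<longleftrightarrow>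
        \<psi> \<in> Hspace \<and> \<phi> \<in> Hspace \<and>
        ((\<lambda>h. Hnorm (\<lambda>x. (T h \<psi> x - \<psi> x) / complex_of_real h - \<phi> x)) \<longlongrightarrow> 0) (at_right 0))"

definition admissible_restriction ::
  "(real \<Rightarrow> fock \<Rightarrow> fock) \<Rightarrow> fock set \<Rightarrow> (fock \<Rightarrow> real) \<Rightarrow> bool" where
  "admissible_restriction T V N \<longleftrightarrow>
     (\<forall>t\<ge>0. \<forall>\<psi>\<in>V. T t \<psi> \<in> V) \<and>
     (\<forall>t\<ge>0. \<exists>C. \<forall>\<psi>\<in>V. N (T t \<psi>) \<le> C * N \<psi>) \<and>
     (\<forall>\<psi>\<in>V. \<forall>t\<ge>0.
        ((\<lambda>s. N (\<lambda>x. T s \<psi> x - T t \<psi> x)) \<longlongrightarrow> 0) (at t within {0..}))"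

end

theory Submission
  imports Defs
begin

lemma Hspace_iff: "f \<in> Hspace \<longleftrightarrow> (\<lambda>x. (cmod (f x))\<^sup>2) summable_on UNIV"
  by (simp add: Hspace_def)

lemma Hnorm_eq: "Hnorm f = sqrt (\<Sum>\<^sub>\<infinity>x. (cmod (f x))\<^sup>2)"
  by (simp add: Hnorm_def wsum_def)

lemma sum_le_infsum_nonneg:
  fixes f :: "'a \<Rightarrow> real"
  assumes "f summable_on UNIV" "\<And>x. f x \<ge> 0" "finite F"
  shows "sum f F \<le> (\<Sum>\<^sub>\<infinity>x. f x)"
proof -
  have "sum f F = infsum f F" using assms by simp
  also have "\<dots> \<le> infsum f UNIV"
    by (rule infsum_mono_neutral) (use assms in auto)
  finally show ?thesis .
qed

lemma CS_real:
  fixes f g :: "'a \<Rightarrow> real"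
  assumes f0: "\<And>x. f x \<ge> 0" and g0: "\<And>x. g x \<ge> 0"
    and fs: "(\<lambda>x. (f x)\<^sup>2) summable_on UNIV" and gs: "(\<lambda>x. (g x)\<^sup>2) summable_on UNIV"
  shows "(\<lambda>x. f x * g x) summable_on UNIV"
    and "(\<Sum>\<^sub>\<infinity>x. f x * g x) \<le> sqrt (\<Sum>\<^sub>\<infinity>x. (f x)\<^sup>2) * sqrt (\<Sum>\<^sub>\<infinity>x. (g x)\<^sup>2)"
proof -
  have s: "(\<lambda>x. (1/2) * ((f x)\<^sup>2 + (g x)\<^sup>2)) summable_on UNIV"
    using summable_on_add[OF fs gs] by (rule summable_on_cmult_right)
  show sm: "(\<lambda>x. f x * g x) summable_on UNIV"
  proof (rule summable_on_comparison_test[OF s])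
    fix x show "f x * g x \<le> (1/2) * ((f x)\<^sup>2 + (g x)\<^sup>2)"
      using sum_squares_ge_zero[of "f x - g x" 0] by (simp add: power2_eq_square algebra_simps)
    show "0 \<le> f x * g x" using f0 g0 by simp
  qed
  show "(\<Sum>\<^sub>\<infinity>x. f x * g x) \<le> sqrt (\<Sum>\<^sub>\<infinity>x. (f x)\<^sup>2) * sqrt (\<Sum>\<^sub>\<infinity>x. (g x)\<^sup>2)"
  proof (rule infsum_le_finite_sums[OF sm])
    fix F :: "'a set" assume F: "finite F" "F \<subseteq> UNIV"
    have "(\<Sum>x\<in>F. f x * g x) = (\<Sum>x\<in>F. \<bar>f x\<bar> * \<bar>g x\<bar>)" using f0 g0 by simp
    also have "\<dots> \<le> L2_set f F * L2_set g F" by (rule L2_set_mult_ineq)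
    also have "\<dots> \<le> sqrt (\<Sum>\<^sub>\<infinity>x. (f x)\<^sup>2) * sqrt (\<Sum>\<^sub>\<infinity>x. (g x)\<^sup>2)"
      unfolding L2_set_def
      by (intro mult_mono real_sqrt_le_mono sum_le_infsum_nonneg fs gs F) (auto intro: sum_nonneg infsum_nonneg)
    finally show "(\<Sum>x\<in>F. f x * g x) \<le> sqrt (\<Sum>\<^sub>\<infinity>x. (f x)\<^sup>2) * sqrt (\<Sum>\<^sub>\<infinity>x. (g x)\<^sup>2)" .
  qed
qed

lemma CS_H:
  assumes "a \<in> Hspace" "b \<in> Hspace"
  shows "(\<lambda>x. cmod (a x) * cmod (b x)) summable_on UNIV"
    and "(\<Sum>\<^sub>\<infinity>x. cmod (a x) * cmod (b x)) \<le> Hnorm a * Hnorm b"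
  using CS_real[of "\<lambda>x. cmod (a x)" "\<lambda>x. cmod (b x)"] assms
  by (auto simp: Hspace_iff Hnorm_eq)

lemma Hnorm_nonneg: "Hnorm a \<ge> 0"
  by (simp add: Hnorm_eq infsum_nonneg)

lemma Hnorm_sq: "a \<in> Hspace \<Longrightarrow> (Hnorm a)\<^sup>2 = (\<Sum>\<^sub>\<infinity>x. (cmod (a x))\<^sup>2)"
  by (simp add: Hnorm_eq infsum_nonneg)

lemma Hspace_add:
  assumes "a \<in> Hspace" "b \<in> Hspace"
  shows "(\<lambda>x. a x + b x) \<in> Hspace"
proof -
  have s: "(\<lambda>x. 2 * ((cmod (a x))\<^sup>2 + (cmod (b x))\<^sup>2)) summable_on UNIV"
    using summable_on_add[OF assms[unfolded Hspace_iff]] by (intro summable_on_cmult_right)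
  show ?thesis unfolding Hspace_iff
  proof (rule summable_on_comparison_test[OF s])
    fix x
    have "cmod (a x + b x) \<le> cmod (a x) + cmod (b x)" by (rule norm_triangle_ineq)
    hence "(cmod (a x + b x))\<^sup>2 \<le> (cmod (a x) + cmod (b x))\<^sup>2" by (simp add: power_mono)
    also have "\<dots> \<le> 2 * ((cmod (a x))\<^sup>2 + (cmod (b x))\<^sup>2)"
      using sum_squares_ge_zero[of "cmod (a x) - cmod (b x)" 0] by (simp add: power2_eq_square algebra_simps)
    finally show "(cmod (a x + b x))\<^sup>2 \<le> 2 * ((cmod (a x))\<^sup>2 + (cmod (b x))\<^sup>2)" .
  qed simp
qed

lemma Hspace_scale:
  assumes "a \<in> Hspace" shows "(\<lambda>x. c * a x) \<in> Hspace"
  using summable_on_cmult_right[OF assms[unfolded Hspace_iff], of "(cmod c)\<^sup>2"]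
  by (simp add: Hspace_iff norm_mult power_mult_distrib)

lemma Hspace_diff:
  assumes "a \<in> Hspace" "b \<in> Hspace" shows "(\<lambda>x. a x - b x) \<in> Hspace"
  using Hspace_add[OF assms(1) Hspace_scale[OF assms(2), of "-1"]] by simp

lemma Hspace_zero: "(\<lambda>x. 0) \<in> Hspace" by (simp add: Hspace_iff)

lemma Hnorm_triangle:
  assumes "a \<in> Hspace" "b \<in> Hspace"
  shows "Hnorm (\<lambda>x. a x + b x) \<le> Hnorm a + Hnorm b"
proof -
  have sa: "(\<lambda>x. (cmod (a x))\<^sup>2) summable_on UNIV" and sb: "(\<lambda>x. (cmod (b x))\<^sup>2) summable_on UNIV"
    using assms by (auto simp: Hspace_iff)
  note cs = CS_H[OF assms]
  have sab: "(\<lambda>x. (cmod (a x + b x))\<^sup>2) summable_on UNIV" using Hspace_add[OF assms] by (simp add: Hspace_iff)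
  have "(\<Sum>\<^sub>\<infinity>x. (cmod (a x + b x))\<^sup>2) \<le> (\<Sum>\<^sub>\<infinity>x. (cmod (a x))\<^sup>2 + 2 * (cmod (a x) * cmod (b x)) + (cmod (b x))\<^sup>2)"
  proof (rule infsum_mono[OF sab])
    show "(\<lambda>x. (cmod (a x))\<^sup>2 + 2 * (cmod (a x) * cmod (b x)) + (cmod (b x))\<^sup>2) summable_on UNIV"
      by (intro summable_on_add summable_on_cmult_right sa sb cs(1))
    fix x
    have "cmod (a x + b x) \<le> cmod (a x) + cmod (b x)" by (rule norm_triangle_ineq)
    hence "(cmod (a x + b x))\<^sup>2 \<le> (cmod (a x) + cmod (b x))\<^sup>2" by (simp add: power_mono)
    thus "(cmod (a x + b x))\<^sup>2 \<le> (cmod (a x))\<^sup>2 + 2 * (cmod (a x) * cmod (b x)) + (cmod (b x))\<^sup>2"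
      by (simp add: power2_eq_square algebra_simps)
  qed
  also have "\<dots> = (\<Sum>\<^sub>\<infinity>x. (cmod (a x))\<^sup>2) + 2 * (\<Sum>\<^sub>\<infinity>x. cmod (a x) * cmod (b x)) + (\<Sum>\<^sub>\<infinity>x. (cmod (b x))\<^sup>2)"
    by (subst infsum_add, intro summable_on_add summable_on_cmult_right sa sb cs(1), rule sb)
       (subst infsum_add, intro summable_on_cmult_right sa sb cs(1), intro summable_on_cmult_right cs(1),
        simp add: infsum_cmult_right cs(1))
  also have "\<dots> \<le> (Hnorm a)\<^sup>2 + 2 * (Hnorm a * Hnorm b) + (Hnorm b)\<^sup>2"
    using cs(2) Hnorm_sq[OF assms(1)] Hnorm_sq[OF assms(2)] by simp
  also have "\<dots> = (Hnorm a + Hnorm b)\<^sup>2" by (simp add: power2_eq_square algebra_simps)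
  finally have "(Hnorm (\<lambda>x. a x + b x))\<^sup>2 \<le> (Hnorm a + Hnorm b)\<^sup>2"
    using Hnorm_sq[OF Hspace_add[OF assms]] by simp
  thus ?thesis using Hnorm_nonneg[of a] Hnorm_nonneg[of b] by (simp add: power2_le_iff_abs_le abs_le_iff)
qed

lemma infsum_diff_c:
  fixes f g :: "'a \<Rightarrow> complex"
  assumes "f summable_on A" "g summable_on A"
  shows "infsum (\<lambda>x. f x - g x) A = infsum f A - infsum g A"
proof -
  have "infsum (\<lambda>x. f x + (- g x)) A = infsum f A + infsum (\<lambda>x. - g x) A"
    by (rule infsum_add[OF assms(1) summable_on_uminus[THEN iffD2, OF assms(2)]])
  thus ?thesis by (simp add: infsum_uminus)
qed

lemma summable_on_diff_c:
  fixes f g :: "'a \<Rightarrow> complex"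
  assumes "f summable_on A" "g summable_on A"
  shows "(\<lambda>x. f x - g x) summable_on A"
  using summable_on_add[OF assms(1) summable_on_uminus[THEN iffD2, OF assms(2)]] by simp

lemma infsum_of_real_c:
  "infsum (\<lambda>x. complex_of_real (f x)) A = complex_of_real (infsum f A)"
proof (cases "f summable_on A")
  case True
  thus ?thesis by (intro infsumI has_sum_of_real) (simp add: summable_iff_has_sum_infsum)
next
  case False
  have "\<not> (\<lambda>x. complex_of_real (f x)) summable_on A"
    using summable_on_Re[of "\<lambda>x. complex_of_real (f x)" A] False by auto
  thus ?thesis using False by (simp add: infsum_not_exists)
qed

definition ipw :: "(nat \<times> nat \<Rightarrow> real) \<Rightarrow> fock \<Rightarrow> fock \<Rightarrow> complex" where
  "ipw V a b = (\<Sum>\<^sub>\<infinity>x. complex_of_real (V x) * cnj (a x) * b x)"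

lemma ipw_summable:
  assumes V: "\<And>x. 0 \<le> V x" "\<And>x. V x \<le> R" and ab: "a \<in> Hspace" "b \<in> Hspace"
  shows "(\<lambda>x. complex_of_real (V x) * cnj (a x) * b x) summable_on UNIV"
    and "(\<lambda>x. cmod (complex_of_real (V x) * cnj (a x) * b x)) summable_on UNIV"
    and "cmod (ipw V a b) \<le> R * (Hnorm a * Hnorm b)"
proof -
  note cs = CS_H[OF ab]
  have b: "cmod (complex_of_real (V x) * cnj (a x) * b x) \<le> R * (cmod (a x) * cmod (b x))" for x
  proof -
    have "V x * (cmod (a x) * cmod (b x)) \<le> R * (cmod (a x) * cmod (b x))"
      by (rule mult_right_mono) (use V[of x] in auto)
    thus ?thesis using V[of x] by (simp add: norm_mult abs_of_nonneg mult.assoc)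
  qed
  show ns: "(\<lambda>x. cmod (complex_of_real (V x) * cnj (a x) * b x)) summable_on UNIV"
    by (rule summable_on_comparison_test[OF summable_on_cmult_right[OF cs(1)]]) (use b in auto)
  thus "(\<lambda>x. complex_of_real (V x) * cnj (a x) * b x) summable_on UNIV"
    using summable_on_iff_abs_summable_on_complex by blast
  have "cmod (ipw V a b) \<le> (\<Sum>\<^sub>\<infinity>x. cmod (complex_of_real (V x) * cnj (a x) * b x))"
    unfolding ipw_def by (rule norm_infsum_bound) (use ns in simp)
  also have "\<dots> \<le> (\<Sum>\<^sub>\<infinity>x. R * (cmod (a x) * cmod (b x)))"
    by (rule infsum_mono[OF ns summable_on_cmult_right[OF cs(1)]]) (use b in auto)
  also have "\<dots> = R * (\<Sum>\<^sub>\<infinity>x. cmod (a x) * cmod (b x))"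
    by (simp add: infsum_cmult_right cs(1))
  also have "\<dots> \<le> R * (Hnorm a * Hnorm b)"
    using cs(2) V(1)[of undefined] V(2)[of undefined] by (intro mult_left_mono) auto
  finally show "cmod (ipw V a b) \<le> R * (Hnorm a * Hnorm b)" .
qed

lemma ipw_split:
  assumes V: "\<And>x. 0 \<le> V x" "\<And>x. V x \<le> R"
    and H: "a \<in> Hspace" "b \<in> Hspace" "a' \<in> Hspace" "b' \<in> Hspace"
  shows "ipw V a' b' - ipw V a b = ipw V (\<lambda>x. a' x - a x) b' + ipw V a (\<lambda>x. b' x - b x)"
proof -
  have H2: "(\<lambda>x. a' x - a x) \<in> Hspace" "(\<lambda>x. b' x - b x) \<in> Hspace"
    by (rule Hspace_diff[OF H(3) H(1)], rule Hspace_diff[OF H(4) H(2)])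
  note s1 = ipw_summable(1)[OF V H(3,4)] and s2 = ipw_summable(1)[OF V H(1,2)]
  note s3 = ipw_summable(1)[OF V H2(1) H(4)] and s4 = ipw_summable(1)[OF V H(1) H2(2)]
  have "ipw V a' b' - ipw V a b = (\<Sum>\<^sub>\<infinity>x. complex_of_real (V x) * cnj (a' x) * b' x - complex_of_real (V x) * cnj (a x) * b x)"
    unfolding ipw_def by (rule infsum_diff_c[OF s1 s2, symmetric])
  also have "\<dots> = (\<Sum>\<^sub>\<infinity>x. complex_of_real (V x) * cnj (a' x - a x) * b' x + complex_of_real (V x) * cnj (a x) * (b' x - b x))"
    by (rule infsum_cong) (simp add: algebra_simps)
  also have "\<dots> = ipw V (\<lambda>x. a' x - a x) b' + ipw V a (\<lambda>x. b' x - b x)"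
    unfolding ipw_def by (rule infsum_add[OF s3 s4])
  finally show ?thesis .
qed

lemma ipw_tendsto:
  assumes V: "\<And>x. 0 \<le> V x" "\<And>x. V x \<le> R"
    and H: "a \<in> Hspace" "b \<in> Hspace" and Hev: "eventually (\<lambda>j. a' j \<in> Hspace \<and> b' j \<in> Hspace) F"
    and la: "((\<lambda>j. Hnorm (\<lambda>x. a' j x - a x)) \<longlongrightarrow> 0) F"
    and lb: "((\<lambda>j. Hnorm (\<lambda>x. b' j x - b x)) \<longlongrightarrow> 0) F"
  shows "((\<lambda>j. ipw V (a' j) (b' j)) \<longlongrightarrow> ipw V a b) F"
proof -
  have R0: "0 \<le> R" using V[of undefined] by linarith
  have bnd: "cmod (ipw V (a' j) (b' j) - ipw V a b)
     \<le> R * (Hnorm (\<lambda>x. a' j x - a x) * (Hnorm b + Hnorm (\<lambda>x. b' j x - b x))) + R * (Hnorm a * Hnorm (\<lambda>x. b' j x - b x))"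
    if Hj: "a' j \<in> Hspace" "b' j \<in> Hspace" for j
  proof -
    have H2: "(\<lambda>x. a' j x - a x) \<in> Hspace" "(\<lambda>x. b' j x - b x) \<in> Hspace"
      by (rule Hspace_diff[OF Hj(1) H(1)], rule Hspace_diff[OF Hj(2) H(2)])
    have tb: "Hnorm (b' j) \<le> Hnorm b + Hnorm (\<lambda>x. b' j x - b x)"
      using Hnorm_triangle[OF H(2) H2(2)] by simp
    have "cmod (ipw V (a' j) (b' j) - ipw V a b) \<le> cmod (ipw V (\<lambda>x. a' j x - a x) (b' j)) + cmod (ipw V a (\<lambda>x. b' j x - b x))"
      unfolding ipw_split[OF V H(1,2) Hj(1) Hj(2)] by (rule norm_triangle_ineq)
    also have "\<dots> \<le> R * (Hnorm (\<lambda>x. a' j x - a x) * Hnorm (b' j)) + R * (Hnorm a * Hnorm (\<lambda>x. b' j x - b x))"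
      by (intro add_mono ipw_summable(3)[OF V] H2 H Hj)
    also have "\<dots> \<le> R * (Hnorm (\<lambda>x. a' j x - a x) * (Hnorm b + Hnorm (\<lambda>x. b' j x - b x))) + R * (Hnorm a * Hnorm (\<lambda>x. b' j x - b x))"
      using tb R0 Hnorm_nonneg by (intro add_mono mult_left_mono) auto
    finally show ?thesis .
  qed
  have "((\<lambda>j. R * (Hnorm (\<lambda>x. a' j x - a x) * (Hnorm b + Hnorm (\<lambda>x. b' j x - b x))) + R * (Hnorm a * Hnorm (\<lambda>x. b' j x - b x))) \<longlongrightarrow>
        R * (0 * (Hnorm b + 0)) + R * (Hnorm a * 0)) F"
    by (rule tendsto_add[OF tendsto_mult[OF tendsto_const tendsto_mult[OF la tendsto_add[OF tendsto_const lb]]]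
                            tendsto_mult[OF tendsto_const tendsto_mult[OF tendsto_const lb]]])
  hence "((\<lambda>j. R * (Hnorm (\<lambda>x. a' j x - a x) * (Hnorm b + Hnorm (\<lambda>x. b' j x - b x))) + R * (Hnorm a * Hnorm (\<lambda>x. b' j x - b x))) \<longlongrightarrow> 0) F"
    by simp
  note lim0 = this
  have "((\<lambda>j. ipw V (a' j) (b' j) - ipw V a b) \<longlongrightarrow> 0) F"
    by (rule Lim_null_comparison[OF eventually_mono[OF Hev] lim0]) (use bnd in auto)
  thus ?thesis by (simp add: LIM_zero_iff)
qed

lemma ipw_self: "ipw V a a = complex_of_real (\<Sum>\<^sub>\<infinity>x. V x * (cmod (a x))\<^sup>2)"
proof -
  have "ipw V a a = (\<Sum>\<^sub>\<infinity>x. complex_of_real (V x * (cmod (a x))\<^sup>2))"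
    unfolding ipw_def
  proof (rule infsum_cong)
    fix x
    have "cnj (a x) * a x = complex_of_real ((cmod (a x))\<^sup>2)"
      using complex_norm_square[of "a x"] by (simp only: mult.commute)
    thus "complex_of_real (V x) * cnj (a x) * a x = complex_of_real (V x * (cmod (a x))\<^sup>2)"
      by (simp add: mult.assoc)
  qed
  also have "\<dots> = complex_of_real (\<Sum>\<^sub>\<infinity>x. V x * (cmod (a x))\<^sup>2)"
    by (rule infsum_of_real_c)
  finally show ?thesis .
qed

lemma reindex_bound:
  fixes f h :: "'a \<Rightarrow> real" and g :: "'a \<Rightarrow> 'a"
  assumes inj: "inj_on g A" and out: "\<And>x. x \<notin> A \<Longrightarrow> f x = 0"
    and f0: "\<And>x. x \<in> A \<Longrightarrow> 0 \<le> f x" and fb: "\<And>x. x \<in> A \<Longrightarrow> f x \<le> C * h (g x)"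
    and hs: "h summable_on UNIV" and h0: "\<And>y. 0 \<le> h y" and C0: "C \<ge> 0"
  shows "f summable_on UNIV" "infsum f UNIV \<le> C * infsum h UNIV"
proof -
  have hA: "h summable_on (g ` A)" by (rule summable_on_subset_banach[OF hs]) auto
  hence hgA: "(\<lambda>x. h (g x)) summable_on A" using summable_on_reindex[OF inj, of h] by (simp add: o_def)
  have fA: "f summable_on A"
    by (rule summable_on_comparison_test[OF summable_on_cmult_right[OF hgA, of C]]) (use fb f0 in auto)
  have eq: "infsum f UNIV = infsum f A"
    by (rule infsum_cong_neutral) (use out in auto)
  show "f summable_on UNIV"
    using fA summable_on_cong_neutral[of A UNIV f f] out by auto
  have "infsum f A \<le> infsum (\<lambda>x. C * h (g x)) A"
    by (rule infsum_mono[OF fA summable_on_cmult_right[OF hgA]]) (use fb in auto)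
  also have "\<dots> = C * infsum (\<lambda>x. h (g x)) A" by (rule infsum_cmult_right) (use hgA in auto)
  also have "infsum (\<lambda>x. h (g x)) A = infsum h (g ` A)"
    using infsum_reindex[OF inj, of h] by (simp add: o_def)
  also have "infsum h (g ` A) \<le> infsum h UNIV"
    by (rule infsum_mono_neutral[OF hA hs]) (use h0 in auto)
  finally show "infsum f UNIV \<le> C * infsum h UNIV" using eq C0 by (simp add: mult_left_mono)
qed

definition cf :: "nat \<Rightarrow> nat \<Rightarrow> real" where
  "cf j n = (\<Prod>i<j. real (n + 1 + i))"

lemma cf_nonneg: "0 \<le> cf j n"
  unfolding cf_def by (rule prod_nonneg) auto

lemma cf_le: "cf j n \<le> real (n + j) ^ j"
proof -
  have "cf j n \<le> (\<Prod>i<j. real (n + j))"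
    unfolding cf_def by (rule prod_mono) auto
  thus ?thesis by simp
qed

lemma cf_Suc: "cf (Suc j) n = cf j n * real (n + 1 + j)"
  unfolding cf_def by simp

lemma cf_Suc_shift: "cf (Suc j) n = real (n + 1) * cf j (n + 1)"
  unfolding cf_def prod.lessThan_Suc_shift by (simp add: algebra_simps)

lemma opa_pow: "(op_a ^^ j) f (n, m) = complex_of_real (sqrt (cf j n)) * f (n + j, m)"
proof (induction j arbitrary: f)
  case 0 thus ?case by (simp add: cf_def)
next
  case (Suc j)
  have "(op_a ^^ Suc j) f (n, m) = (op_a ^^ j) (op_a f) (n, m)"
    by (simp add: funpow_Suc_right del: funpow.simps)
  also have "\<dots> = complex_of_real (sqrt (cf j n)) * (complex_of_real (sqrt (real (n + j + 1))) * f (n + j + 1, m))"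
    by (simp add: Suc op_a_def)
  also have "\<dots> = complex_of_real (sqrt (cf (Suc j) n)) * f (n + Suc j, m)"
  proof -
    have "sqrt (cf (Suc j) n) = sqrt (cf j n) * sqrt (real (n + j + 1))"
      by (simp add: cf_Suc real_sqrt_mult add_ac)
    thus ?thesis by (simp add: mult.assoc)
  qed
  finally show ?case .
qed

lemma opadag_pow: "(op_adag ^^ j) f (n, m) = (if n < j then 0 else complex_of_real (sqrt (cf j (n - j))) * f (n - j, m))"
proof (induction j arbitrary: f n)
  case 0 thus ?case by (simp add: cf_def)
next
  case (Suc j)
  have "(op_adag ^^ Suc j) f (n, m) = (op_adag ^^ j) (op_adag f) (n, m)"
    by (simp add: funpow_Suc_right del: funpow.simps)
  also have "\<dots> = (if n < Suc j then 0 else complex_of_real (sqrt (cf (Suc j) (n - Suc j))) * f (n - Suc j, m))"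
  proof (cases "n < Suc j")
    case True thus ?thesis by (cases "n < j") (auto simp: Suc op_adag_def)
  next
    case False
    hence nj: "n - j = (n - Suc j) + 1" by simp
    have "(op_adag ^^ j) (op_adag f) (n, m) = complex_of_real (sqrt (cf j (n - j))) * (complex_of_real (sqrt (real (n - j))) * f (n - j - 1, m))"
      using False by (simp add: Suc op_adag_def)
    also have "\<dots> = complex_of_real (sqrt (cf (Suc j) (n - Suc j))) * f (n - Suc j, m)"
    proof -
      have e: "cf (Suc j) (n - Suc j) = real (n - j) * cf j (n - j)"
        using cf_Suc_shift[of j "n - Suc j"] by (simp only: nj[symmetric])
      have e2: "n - j - 1 = n - Suc j" by simp
      show ?thesis by (simp only: e real_sqrt_mult of_real_mult e2 mult_ac)
    qed
    finally show ?thesis using False by simp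
  qed
  finally show ?case .
qed

lemma pow_shift_le:
  fixes a c :: real and p :: nat
  assumes "0 \<le> a" "0 \<le> c"
  shows "(a + c) ^ p \<le> (1 + c) ^ p * (1 + a ^ p)"
proof (cases "a \<le> 1")
  case True
  have "(a + c) ^ p \<le> (1 + c) ^ p" using assms True by (intro power_mono) auto
  also have "\<dots> \<le> (1 + c) ^ p * (1 + a ^ p)" using assms by (simp add: mult_left_le)
  finally show ?thesis .
next
  case False
  have "a + c \<le> a * (1 + c)" using mult_right_mono[of 1 a c] assms False by (simp add: algebra_simps)
  hence "(a + c) ^ p \<le> (a * (1 + c)) ^ p" using assms by (intro power_mono) auto
  also have "\<dots> = (1 + c) ^ p * a ^ p" by (simp add: power_mult_distrib)
  also have "\<dots> \<le> (1 + c) ^ p * (1 + a ^ p)" using assms by (intro mult_left_mono) auto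
  finally show ?thesis .
qed

lemma amgm: fixes a b :: real shows "a * b \<le> (a\<^sup>2 + b\<^sup>2) / 2"
  using sum_squares_ge_zero[of "a - b" 0] by (simp add: power2_eq_square algebra_simps)

definition P1v :: "nat \<Rightarrow> fock \<Rightarrow> fock" where "P1v k s = (op_a ^^ k) (op_bdag s)"
definition Q1v :: "nat \<Rightarrow> fock \<Rightarrow> fock" where "Q1v k s = (op_adag ^^ k) (op_b s)"

lemma opG_eq: "op_G k \<alpha> \<kappa> s x = - \<i> * ((P1v k s x - complex_of_real (\<alpha> ^ k) * op_bdag s x) + (Q1v k s x - complex_of_real (\<alpha> ^ k) * op_b s x))
                        - complex_of_real (\<kappa> / 2) * op_bdag (op_b s) x"
  by (simp add: op_G_def op_L_def op_Ldag_def P1v_def Q1v_def)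

lemma P1v_eq: "P1v k s (n, m) = (if m = 0 then 0 else complex_of_real (sqrt (cf k n) * sqrt (real m)) * s (n + k, m - 1))"
  by (simp add: P1v_def opa_pow op_bdag_def)

lemma Q1v_eq: "Q1v k s (n, m) = (if n < k then 0 else complex_of_real (sqrt (cf k (n - k)) * sqrt (real (m + 1))) * s (n - k, m + 1))"
  by (simp add: Q1v_def opadag_pow op_b_def)

lemma bdag_eq: "op_bdag s (n, m) = (if m = 0 then 0 else complex_of_real (sqrt (real m)) * s (n, m - 1))"
  by (simp add: op_bdag_def)

lemma b_eq: "op_b s (n, m) = complex_of_real (sqrt (real (m + 1))) * s (n, m + 1)"
  by (simp add: op_b_def)

lemma M_eq: "op_bdag (op_b s) (n, m) = complex_of_real (real m) * s (n, m)"
proof -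
  have "complex_of_real (sqrt (real m)) * complex_of_real (sqrt (real m)) = complex_of_real (real m)"
    by (simp flip: of_real_mult)
  thus ?thesis by (simp add: op_bdag_def op_b_def mult.assoc[symmetric])
qed

lemma cmod_sq_sqrt: "0 \<le> a \<Longrightarrow> 0 \<le> b \<Longrightarrow> (cmod (complex_of_real (sqrt a * sqrt b) * z))\<^sup>2 = a * b * (cmod z)\<^sup>2"
  by (simp add: norm_mult power_mult_distrib)

lemma cmod_sq_sqrt1: "0 \<le> a \<Longrightarrow> (cmod (complex_of_real (sqrt a) * z))\<^sup>2 = a * (cmod z)\<^sup>2"
  by (simp add: norm_mult power_mult_distrib)

definition Ck :: "nat \<Rightarrow> real" where "Ck k = (1 + real k) ^ (2 * k)"

lemma Ck_ge: "k \<ge> 1 \<Longrightarrow> 2 \<le> Ck k"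
proof -
  assume k: "k \<ge> 1"
  have "(1 + real k) ^ 1 \<le> (1 + real k) ^ (2 * k)" by (rule power_increasing) (use k in auto)
  thus ?thesis using k unfolding Ck_def by simp
qed

lemma wpq_ge1: "1 \<le> wpq p q x"
  by (simp add: wpq_def)

definition hD :: "nat \<Rightarrow> fock \<Rightarrow> nat \<times> nat \<Rightarrow> real" where
  "hD k s y = wpq (2 * k) 2 y * (cmod (s y))\<^sup>2"

lemma hD_nonneg: "0 \<le> hD k s y"
  using wpq_ge1[of "2*k" 2 y] by (simp add: hD_def)

lemma hD_summable: "s \<in> Hpq (2 * k) 2 \<Longrightarrow> hD k s summable_on UNIV"
  by (simp add: Hpq_def hD_def[abs_def])

lemma pow_sq_2k: "(x ^ k)\<^sup>2 = (x::real) ^ (2 * k)"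
  by (simp only: power_mult[symmetric] mult.commute[of k 2])

lemma num_P1: "1 \<le> m \<Longrightarrow> real (n + k) ^ k * real m \<le> wpq (2 * k) 2 (n + k, m - 1)"
proof -
  assume m: "1 \<le> m"
  define r where "r = real (m - 1)"
  have rm: "real m = r + 1" using m by (simp add: r_def)
  have sq: "(real m)\<^sup>2 \<le> 2 * r\<^sup>2 + 2"
  proof -
    have "0 \<le> (r - 1)\<^sup>2" by simp
    thus ?thesis unfolding rm by (simp add: power2_eq_square algebra_simps)
  qed
  have "real (n + k) ^ k * real m \<le> ((real (n + k) ^ k)\<^sup>2 + (real m)\<^sup>2) / 2" by (rule amgm)
  also have "\<dots> \<le> (real (n + k) ^ (2 * k) + (2 * r\<^sup>2 + 2)) / 2"
    using sq by (simp add: pow_sq_2k)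
  also have "\<dots> \<le> wpq (2 * k) 2 (n + k, m - 1)" by (simp add: wpq_def r_def)
  finally show ?thesis .
qed

lemma num_Q1: "k \<le> n \<Longrightarrow> real n ^ k * real (m + 1) \<le> Ck k * wpq (2 * k) 2 (n - k, m + 1)"
proof -
  assume n: "k \<le> n"
  have C1: "1 \<le> Ck k" unfolding Ck_def by (rule one_le_power) simp
  have e: "real n = real (n - k) + real k" using n by simp
  have p: "real n ^ (2 * k) \<le> Ck k * (1 + real (n - k) ^ (2 * k))"
    unfolding e Ck_def by (rule pow_shift_le) auto
  have q: "(real (m + 1))\<^sup>2 \<le> Ck k * (real (m + 1))\<^sup>2" using C1 by (simp add: mult_le_cancel_right1)
  have "real n ^ k * real (m + 1) \<le> ((real n ^ k)\<^sup>2 + (real (m + 1))\<^sup>2) / 2" by (rule amgm)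
  also have "\<dots> \<le> (Ck k * (1 + real (n - k) ^ (2 * k)) + Ck k * (real (m + 1))\<^sup>2) / 2"
    by (intro divide_right_mono) (use add_mono[OF p q] in \<open>simp_all add: pow_sq_2k\<close>)
  also have "\<dots> \<le> Ck k * wpq (2 * k) 2 (n - k, m + 1)"
  proof -
    have "(1 + real (n - k) ^ (2 * k) + (real (m + 1))\<^sup>2) / 2 \<le> wpq (2 * k) 2 (n - k, m + 1)"
      by (simp add: wpq_def)
    hence "Ck k * ((1 + real (n - k) ^ (2 * k) + (real (m + 1))\<^sup>2) / 2) \<le> Ck k * wpq (2 * k) 2 (n - k, m + 1)"
      using C1 by (intro mult_left_mono) auto
    thus ?thesis by (simp add: algebra_simps)
  qed
  finally show ?thesis .
qed

lemma inj_P1: "inj_on (\<lambda>(n::nat, m::nat). (n + k, m - 1)) {x. 1 \<le> snd x}"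
  unfolding inj_on_def split_paired_all by simp arith

lemma inj_Q1: "inj_on (\<lambda>(n::nat, m::nat). (n - k, m + 1)) {x. k \<le> fst x}"
  unfolding inj_on_def split_paired_all by simp arith

lemma inj_bdag: "inj_on (\<lambda>(n::nat, m::nat). (n, m - 1)) {x. 1 \<le> snd x}"
  unfolding inj_on_def split_paired_all by simp arith

lemma inj_b: "inj_on (\<lambda>(n::nat, m::nat). (n, m + 1)) UNIV"
  unfolding inj_on_def split_paired_all by simp

lemma P1v_bound:
  assumes k: "k \<ge> 1" and s: "s \<in> Hpq (2 * k) 2"
  shows "(\<lambda>x. (cmod (P1v k s x))\<^sup>2) summable_on UNIV" "(\<Sum>\<^sub>\<infinity>x. (cmod (P1v k s x))\<^sup>2) \<le> Ck k * (\<Sum>\<^sub>\<infinity>y. hD k s y)"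
proof -
  have C1: "1 \<le> Ck k" using Ck_ge[OF k] by simp
  have b: "(cmod (P1v k s x))\<^sup>2 \<le> Ck k * hD k s ((\<lambda>(n, m). (n + k, m - 1)) x)" if "x \<in> {x. 1 \<le> snd x}" for x
  proof -
    obtain n m where x: "x = (n, m)" by fastforce
    have m: "1 \<le> m" using that x by simp
    have "(cmod (P1v k s x))\<^sup>2 = cf k n * real m * (cmod (s (n + k, m - 1)))\<^sup>2"
      using m x by (simp add: P1v_eq norm_mult power_mult_distrib cf_nonneg)
    also have "\<dots> \<le> real (n + k) ^ k * real m * (cmod (s (n + k, m - 1)))\<^sup>2"
      by (intro mult_right_mono cf_le) auto
    also have "\<dots> \<le> wpq (2 * k) 2 (n + k, m - 1) * (cmod (s (n + k, m - 1)))\<^sup>2"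
      by (intro mult_right_mono num_P1 m) auto
    also have "\<dots> \<le> Ck k * hD k s ((\<lambda>(n, m). (n + k, m - 1)) x)"
      using C1 hD_nonneg[of k s "(n + k, m - 1)"] by (simp add: x hD_def mult_le_cancel_right1)
    finally show ?thesis .
  qed
  have out: "(cmod (P1v k s x))\<^sup>2 = 0" if "x \<notin> {x. 1 \<le> snd x}" for x
  proof -
    obtain n m where x: "x = (n, m)" by fastforce
    show ?thesis using that by (simp add: x P1v_eq)
  qed
  note r = reindex_bound[OF inj_P1, of "\<lambda>x. (cmod (P1v k s x))\<^sup>2", OF out _ b hD_summable[OF s] hD_nonneg]
  show "(\<lambda>x. (cmod (P1v k s x))\<^sup>2) summable_on UNIV" "(\<Sum>\<^sub>\<infinity>x. (cmod (P1v k s x))\<^sup>2) \<le> Ck k * (\<Sum>\<^sub>\<infinity>y. hD k s y)"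
    using r C1 by auto
qed


lemma out_zero_sq: "(\<And>x. x \<notin> A \<Longrightarrow> X x = 0) \<Longrightarrow> x \<notin> A \<Longrightarrow> (cmod (X x))\<^sup>2 = 0"
  by simp

lemma Q1v_bound:
  assumes k: "k \<ge> 1" and s: "s \<in> Hpq (2 * k) 2"
  shows "(\<lambda>x. (cmod (Q1v k s x))\<^sup>2) summable_on UNIV" "(\<Sum>\<^sub>\<infinity>x. (cmod (Q1v k s x))\<^sup>2) \<le> Ck k * (\<Sum>\<^sub>\<infinity>y. hD k s y)"
proof -
  have C1: "1 \<le> Ck k" using Ck_ge[OF k] by simp
  have b: "(cmod (Q1v k s x))\<^sup>2 \<le> Ck k * hD k s ((\<lambda>(n, m). (n - k, m + 1)) x)" if "x \<in> {x. k \<le> fst x}" for x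
  proof -
    obtain n m where x: "x = (n, m)" by fastforce
    have n: "k \<le> n" using that x by simp
    have "(cmod (Q1v k s x))\<^sup>2 = cf k (n - k) * real (m + 1) * (cmod (s (n - k, m + 1)))\<^sup>2"
      using n x by (simp add: Q1v_eq norm_mult power_mult_distrib cf_nonneg)
    also have "\<dots> \<le> real n ^ k * real (m + 1) * (cmod (s (n - k, m + 1)))\<^sup>2"
      using cf_le[of k "n - k"] n by (intro mult_right_mono) auto
    also have "\<dots> \<le> Ck k * wpq (2 * k) 2 (n - k, m + 1) * (cmod (s (n - k, m + 1)))\<^sup>2"
      by (intro mult_right_mono num_Q1 n) auto
    also have "\<dots> = Ck k * hD k s ((\<lambda>(n, m). (n - k, m + 1)) x)"
      by (simp add: x hD_def)
    finally show ?thesis .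
  qed
  have out: "(cmod (Q1v k s x))\<^sup>2 = 0" if "x \<notin> {x. k \<le> fst x}" for x
  proof -
    obtain n m where x: "x = (n, m)" by fastforce
    show ?thesis using that by (simp add: x Q1v_eq)
  qed
  note r = reindex_bound[OF inj_Q1[of k], where f="\<lambda>x. (cmod (Q1v k s x))\<^sup>2", OF out _ b hD_summable[OF s] hD_nonneg]
  show "(\<lambda>x. (cmod (Q1v k s x))\<^sup>2) summable_on UNIV" "(\<Sum>\<^sub>\<infinity>x. (cmod (Q1v k s x))\<^sup>2) \<le> Ck k * (\<Sum>\<^sub>\<infinity>y. hD k s y)"
    using r C1 by auto
qed

lemma bdag_bound:
  assumes k: "k \<ge> 1" and s: "s \<in> Hpq (2 * k) 2"
  shows "(\<lambda>x. (cmod (op_bdag s x))\<^sup>2) summable_on UNIV" "(\<Sum>\<^sub>\<infinity>x. (cmod (op_bdag s x))\<^sup>2) \<le> Ck k * (\<Sum>\<^sub>\<infinity>y. hD k s y)"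
proof -
  have C1: "1 \<le> Ck k" and C2: "2 \<le> Ck k" using Ck_ge[OF k] by simp_all
  have b: "(cmod (op_bdag s x))\<^sup>2 \<le> Ck k * hD k s ((\<lambda>(n, m). (n, m - 1)) x)" if "x \<in> {x. 1 \<le> snd x}" for x
  proof -
    obtain n m where x: "x = (n, m)" by fastforce
    have m: "1 \<le> m" using that x by simp
    have num: "real m \<le> Ck k * wpq (2 * k) 2 (n, m - 1)"
    proof -
      define r where "r = real (m - 1)"
      have rm: "real m = r + 1" using m by (simp add: r_def)
      have r0: "0 \<le> r" by (simp add: r_def)
      have "real m \<le> 2 * (1 + r\<^sup>2)"
      proof -
        have "r \<le> 1 + r\<^sup>2"
        proof (cases "r \<le> 1")
          case True thus ?thesis by (smt (verit) zero_le_power2)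
        next
          case False
          hence "r * 1 \<le> r * r" using r0 by (intro mult_left_mono) auto
          thus ?thesis by (simp add: power2_eq_square)
        qed
        moreover have "0 \<le> r\<^sup>2" by simp
        ultimately show ?thesis unfolding rm by (smt (verit))
      qed
      also have "\<dots> \<le> 2 * wpq (2 * k) 2 (n, m - 1)" by (simp add: wpq_def r_def)
      also have "\<dots> \<le> Ck k * wpq (2 * k) 2 (n, m - 1)"
        using C2 wpq_ge1[of "2*k" 2 "(n, m - 1)"] by (intro mult_right_mono) auto
      finally show ?thesis .
    qed
    have "(cmod (op_bdag s x))\<^sup>2 = real m * (cmod (s (n, m - 1)))\<^sup>2"
      using m x by (simp add: bdag_eq norm_mult power_mult_distrib)
    also have "\<dots> \<le> Ck k * wpq (2 * k) 2 (n, m - 1) * (cmod (s (n, m - 1)))\<^sup>2"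
      by (intro mult_right_mono num) auto
    also have "\<dots> = Ck k * hD k s ((\<lambda>(n, m). (n, m - 1)) x)"
      by (simp add: x hD_def)
    finally show ?thesis .
  qed
  have out: "(cmod (op_bdag s x))\<^sup>2 = 0" if "x \<notin> {x. 1 \<le> snd x}" for x
  proof -
    obtain n m where x: "x = (n, m)" by fastforce
    show ?thesis using that by (simp add: x bdag_eq)
  qed
  note r = reindex_bound[OF inj_bdag, where f="\<lambda>x. (cmod (op_bdag s x))\<^sup>2", OF out _ b hD_summable[OF s] hD_nonneg]
  show "(\<lambda>x. (cmod (op_bdag s x))\<^sup>2) summable_on UNIV" "(\<Sum>\<^sub>\<infinity>x. (cmod (op_bdag s x))\<^sup>2) \<le> Ck k * (\<Sum>\<^sub>\<infinity>y. hD k s y)"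
    using r C1 by auto
qed

lemma b_bound:
  assumes k: "k \<ge> 1" and s: "s \<in> Hpq (2 * k) 2"
  shows "(\<lambda>x. (cmod (op_b s x))\<^sup>2) summable_on UNIV" "(\<Sum>\<^sub>\<infinity>x. (cmod (op_b s x))\<^sup>2) \<le> Ck k * (\<Sum>\<^sub>\<infinity>y. hD k s y)"
proof -
  have C1: "1 \<le> Ck k" using Ck_ge[OF k] by simp
  have b: "(cmod (op_b s x))\<^sup>2 \<le> Ck k * hD k s ((\<lambda>(n, m). (n, m + 1)) x)" if "x \<in> UNIV" for x
  proof -
    obtain n m where x: "x = (n, m)" by fastforce
    have num: "real (m + 1) \<le> Ck k * wpq (2 * k) 2 (n, m + 1)"
    proof -
      have "real (m + 1) \<le> 1 + (real (m + 1))\<^sup>2"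
      proof -
        have "0 \<le> (real (m + 1) - 1)\<^sup>2" by simp
        thus ?thesis by (simp add: power2_eq_square algebra_simps)
      qed
      also have "\<dots> \<le> wpq (2 * k) 2 (n, m + 1)" by (simp add: wpq_def)
      also have "\<dots> \<le> Ck k * wpq (2 * k) 2 (n, m + 1)"
        using C1 wpq_ge1[of "2*k" 2 "(n, m + 1)"] by (simp add: mult_le_cancel_right1)
      finally show ?thesis .
    qed
    have "(cmod (op_b s x))\<^sup>2 = real (m + 1) * (cmod (s (n, m + 1)))\<^sup>2"
      using x by (simp add: b_eq norm_mult power_mult_distrib)
    also have "\<dots> \<le> Ck k * wpq (2 * k) 2 (n, m + 1) * (cmod (s (n, m + 1)))\<^sup>2"
      by (intro mult_right_mono num) auto
    also have "\<dots> = Ck k * hD k s ((\<lambda>(n, m). (n, m + 1)) x)"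
      by (simp add: x hD_def)
    finally show ?thesis .
  qed
  note r = reindex_bound[OF inj_b, where f="\<lambda>x. (cmod (op_b s x))\<^sup>2", OF _ _ b hD_summable[OF s] hD_nonneg]
  show "(\<lambda>x. (cmod (op_b s x))\<^sup>2) summable_on UNIV" "(\<Sum>\<^sub>\<infinity>x. (cmod (op_b s x))\<^sup>2) \<le> Ck k * (\<Sum>\<^sub>\<infinity>y. hD k s y)"
    using r C1 by auto
qed

lemma M_bound:
  assumes k: "k \<ge> 1" and s: "s \<in> Hpq (2 * k) 2"
  shows "(\<lambda>x. (cmod (op_bdag (op_b s) x))\<^sup>2) summable_on UNIV"
proof -
  have b: "(cmod (op_bdag (op_b s) x))\<^sup>2 \<le> 1 * hD k s ((\<lambda>x. x) x)" if "x \<in> UNIV" for x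
  proof -
    obtain n m where x: "x = (n, m)" by fastforce
    have "(cmod (op_bdag (op_b s) x))\<^sup>2 = (real m)\<^sup>2 * (cmod (s (n, m)))\<^sup>2"
      using x by (simp add: M_eq norm_mult power_mult_distrib)
    also have "\<dots> \<le> wpq (2 * k) 2 (n, m) * (cmod (s (n, m)))\<^sup>2"
      by (intro mult_right_mono) (auto simp: wpq_def)
    finally show ?thesis by (simp add: x hD_def)
  qed
  show ?thesis using reindex_bound(1)[of "\<lambda>x. x" UNIV "\<lambda>x. (cmod (op_bdag (op_b s) x))\<^sup>2", OF _ _ _ b hD_summable[OF s] hD_nonneg]
    by auto
qed

lemma Hpq_sub_H: "s \<in> Hpq p q \<Longrightarrow> s \<in> Hspace"
  unfolding Hpq_def Hspace_iff
  by (rule summable_on_comparison_test[of "\<lambda>x. wpq p q x * (cmod (s x))\<^sup>2"]) (use wpq_ge1 in \<open>auto simp: mult_le_cancel_right1\<close>)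

lemma G_in_H:
  assumes k: "k \<ge> 1" and s: "s \<in> Hpq (2 * k) 2"
  shows "op_G k \<alpha> \<kappa> s \<in> Hspace"
proof -
  have p: "P1v k s \<in> Hspace" "Q1v k s \<in> Hspace" "op_bdag s \<in> Hspace" "op_b s \<in> Hspace" "op_bdag (op_b s) \<in> Hspace"
    using P1v_bound(1)[OF k s] Q1v_bound(1)[OF k s] bdag_bound(1)[OF k s] b_bound(1)[OF k s] M_bound[OF k s]
    by (simp_all add: Hspace_iff)
  have "(\<lambda>x. - \<i> * ((P1v k s x - complex_of_real (\<alpha> ^ k) * op_bdag s x) + (Q1v k s x - complex_of_real (\<alpha> ^ k) * op_b s x))
                        - complex_of_real (\<kappa> / 2) * op_bdag (op_b s) x) \<in> Hspace"
    by (intro Hspace_diff Hspace_scale Hspace_add p)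
  thus ?thesis by (simp add: opG_eq[abs_def])
qed

lemma amgm_d:
  fixes x y d :: real assumes d: "0 < d"
  shows "x * y \<le> (d * x\<^sup>2 + y\<^sup>2 / d) / 2"
proof -
  have "0 \<le> (d * x - y)\<^sup>2 / d" using d by simp
  also have "(d * x - y)\<^sup>2 / d = d * x\<^sup>2 - 2 * (x * y) + y\<^sup>2 / d"
    using d by (simp add: field_simps power2_eq_square)
  finally show ?thesis by simp
qed

definition CL :: "nat \<Rightarrow> real \<Rightarrow> real \<Rightarrow> real" where
  "CL k \<alpha> \<kappa> = \<bar>\<alpha>\<bar> ^ k * (1 + Ck k) * (2 * \<bar>\<alpha>\<bar> ^ k + 1) / (2 * \<kappa>)"

lemma ipw_lin3:
  assumes V: "\<And>x. 0 \<le> V x" "\<And>x. V x \<le> R"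
    and H: "a \<in> Hspace" "b1 \<in> Hspace" "b2 \<in> Hspace" "b3 \<in> Hspace"
  shows "ipw V a (\<lambda>x. c1 * b1 x + c2 * b2 x + b3 x) = c1 * ipw V a b1 + c2 * ipw V a b2 + ipw V a b3"
proof -
  note s1 = ipw_summable(1)[OF V H(1,2)] and s2 = ipw_summable(1)[OF V H(1,3)] and s3 = ipw_summable(1)[OF V H(1,4)]
  have "ipw V a (\<lambda>x. c1 * b1 x + c2 * b2 x + b3 x) =
     (\<Sum>\<^sub>\<infinity>x. c1 * (complex_of_real (V x) * cnj (a x) * b1 x) + c2 * (complex_of_real (V x) * cnj (a x) * b2 x) + complex_of_real (V x) * cnj (a x) * b3 x)"
    unfolding ipw_def by (rule infsum_cong) (simp add: algebra_simps)
  also have "\<dots> = c1 * ipw V a b1 + c2 * ipw V a b2 + ipw V a b3"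
    unfolding ipw_def
    by (subst infsum_add, intro summable_on_add summable_on_cmult_right s1 s2, rule s3,
        subst infsum_add, intro summable_on_cmult_right s1, intro summable_on_cmult_right s2,
        simp add: infsum_cmult_right s1 s2)
  finally show ?thesis .
qed

locale Vweight =
  fixes k :: nat and V :: "nat \<times> nat \<Rightarrow> real" and R :: real
  assumes k1: "k \<ge> 1"
    and V0: "\<And>x. 0 \<le> V x" and VR: "\<And>x. V x \<le> R"
    and Vshift: "\<And>n m. V (n + k, m) = V (n, m + 1)"
    and Vmono: "\<And>n m. V (n, m) \<le> V (n, m + 1)"
    and Vgrow: "\<And>n m. V (n, m + 1) \<le> Ck k * V (n, m)"
begin

lemma pairing: "ipw V s (Q1v k s) = cnj (ipw V s (P1v k s))"
proof -
  define E where "E x = complex_of_real (V x) * cnj (s x) * P1v k s x" for x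
  define F where "F y = complex_of_real (V y) * cnj (s y) * Q1v k s y" for y
  define h where "h = (\<lambda>(n::nat, m::nat). (n - k, m + 1))"
  define A where "A = {x::nat\<times>nat. 1 \<le> snd x}"
  define B where "B = {x::nat\<times>nat. k \<le> fst x}"
  have inj: "inj_on h B" unfolding h_def B_def by (rule inj_Q1)
  have hB: "h ` B = A"
  proof
    show "h ` B \<subseteq> A" by (auto simp: h_def A_def B_def)
    show "A \<subseteq> h ` B"
    proof
      fix x assume "x \<in> A"
      then obtain n m where x: "x = (n, m)" "1 \<le> m" by (cases x) (auto simp: A_def)
      have "(n + k, m - 1) \<in> B" by (simp add: B_def)
      moreover have "h (n + k, m - 1) = x" using x by (simp add: h_def)
      ultimately show "x \<in> h ` B" by (metis image_eqI)
    qed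
  qed
  have a: "infsum F UNIV = infsum F B"
  proof (rule infsum_cong_neutral)
    fix x assume "x \<in> UNIV - B"
    then obtain n m where "x = (n, m)" "n < k" by (cases x) (auto simp: B_def)
    thus "F x = 0" by (simp add: F_def Q1v_eq)
  qed auto
  have b: "F y = cnj (E (h y))" if yB: "y \<in> B" for y
  proof -
    obtain n m where y: "y = (n, m)" and n: "k \<le> n" using yB by (cases y) (auto simp: B_def)
    have v: "V (n - k, Suc m) = V (n, m)" using Vshift[of "n - k" m] n by simp
    show ?thesis using n
      by (simp add: y E_def F_def h_def Q1v_eq P1v_eq v)
  qed
  have "infsum F B = infsum (\<lambda>y. cnj (E (h y))) B" by (rule infsum_cong) (use b in auto)
  also have "\<dots> = cnj (infsum (\<lambda>y. E (h y)) B)" by simp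
  also have "infsum (\<lambda>y. E (h y)) B = infsum E A"
    using infsum_reindex[OF inj, of E] hB by (simp add: o_def)
  also have "infsum E A = infsum E UNIV"
  proof (rule infsum_cong_neutral)
    fix x assume "x \<in> UNIV - A"
    then obtain n m where "x = (n, m)" "m = 0" by (cases x) (auto simp: A_def)
    thus "E x = 0" by (simp add: E_def P1v_eq)
  qed auto
  finally show ?thesis using a by (simp add: ipw_def E_def[abs_def] F_def[abs_def])
qed


definition hV :: "fock \<Rightarrow> nat \<times> nat \<Rightarrow> real" where "hV s x = V x * (cmod (s x))\<^sup>2"
definition mhV :: "fock \<Rightarrow> nat \<times> nat \<Rightarrow> real" where "mhV s x = real (snd x) * hV s x"
definition T1 :: "fock \<Rightarrow> nat \<times> nat \<Rightarrow> real" where "T1 s x = (if snd x = 0 then 0 else hV s (fst x, snd x - 1))"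
definition T2 :: "fock \<Rightarrow> nat \<times> nat \<Rightarrow> real" where "T2 s x = mhV s (fst x, snd x + 1)"

lemma hV_nonneg: "0 \<le> hV s x" using V0[of x] by (simp add: hV_def)
lemma mhV_nonneg: "0 \<le> mhV s x" using hV_nonneg by (simp add: mhV_def)

lemma pw:
  assumes d: "0 < d"
  shows "Re (complex_of_real (V x) * cnj (s x) * (\<i> * complex_of_real a * (op_bdag s x + op_b s x) - complex_of_real (\<kappa> / 2) * op_bdag (op_b s) x))
     \<le> (\<bar>a\<bar> * d / 2 - \<kappa> / 2) * mhV s x + \<bar>a\<bar> / (2 * d) * hV s x + \<bar>a\<bar> * Ck k / (2 * d) * T1 s x + \<bar>a\<bar> * d / 2 * T2 s x"
proof -
  obtain n m where x: "x = (n, m)" by fastforce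
  define v where "v = V (n, m)"
  define z1 where "z1 = s (n, m)"
  define w1 where "w1 = complex_of_real v * cnj z1 * \<i> * complex_of_real a * op_bdag s x"
  define w2 where "w2 = complex_of_real v * cnj z1 * \<i> * complex_of_real a * op_b s x"
  have v0: "0 \<le> v" using V0 by (simp add: v_def)
  have eq: "Re (complex_of_real (V x) * cnj (s x) * (\<i> * complex_of_real a * (op_bdag s x + op_b s x) - complex_of_real (\<kappa> / 2) * op_bdag (op_b s) x))
      = Re w1 + Re w2 - \<kappa> / 2 * mhV s x"
  proof -
    have "complex_of_real (V x) * cnj (s x) * (\<i> * complex_of_real a * (op_bdag s x + op_b s x) - complex_of_real (\<kappa> / 2) * op_bdag (op_b s) x)
        = w1 + w2 - complex_of_real (\<kappa> / 2 * real m * v) * (cnj z1 * z1)"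
      by (simp add: w1_def w2_def x v_def z1_def M_eq algebra_simps)
    moreover have "cnj z1 * z1 = complex_of_real ((cmod z1)\<^sup>2)"
      using complex_norm_square[of z1] by (simp only: mult.commute)
    ultimately show ?thesis by (simp add: mhV_def hV_def x v_def z1_def)
  qed
  have bd: "Re w1 \<le> \<bar>a\<bar> * (d / 2 * mhV s x + Ck k / (2 * d) * T1 s x)"
  proof (cases "m = 0")
    case True
    hence "w1 = 0" by (simp add: w1_def x bdag_eq)
    thus ?thesis using True d by (simp add: mhV_def T1_def x)
  next
    case False
    define z0 where "z0 = s (n, m - 1)"
    have "Re w1 \<le> cmod w1" by (rule complex_Re_le_cmod)
    also have "cmod w1 = \<bar>a\<bar> * (v * ((sqrt (real m) * cmod z1) * cmod z0))"
      using False v0 by (simp add: w1_def x bdag_eq norm_mult z0_def)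
    also have "\<dots> \<le> \<bar>a\<bar> * (v * ((d * (sqrt (real m) * cmod z1)\<^sup>2 + (cmod z0)\<^sup>2 / d) / 2))"
      by (intro mult_left_mono amgm_d d v0) auto
    also have "\<dots> = \<bar>a\<bar> * (d / 2 * mhV s x + v * (cmod z0)\<^sup>2 / (2 * d))"
      by (simp add: mhV_def hV_def x v_def z1_def power_mult_distrib field_simps)
    also have "\<dots> \<le> \<bar>a\<bar> * (d / 2 * mhV s x + Ck k / (2 * d) * T1 s x)"
    proof -
      have vg: "v \<le> Ck k * V (n, m - 1)" using Vgrow[of n "m - 1"] False by (simp add: v_def)
      have "v * (cmod z0)\<^sup>2 / (2 * d) \<le> Ck k * V (n, m - 1) * (cmod z0)\<^sup>2 / (2 * d)"
        using vg d by (intro divide_right_mono mult_right_mono) auto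
      also have "\<dots> = Ck k / (2 * d) * T1 s x" using False by (simp add: T1_def hV_def x z0_def)
      finally show ?thesis by (intro mult_left_mono) auto
    qed
    finally show ?thesis .
  qed
  have bb: "Re w2 \<le> \<bar>a\<bar> * (1 / (2 * d) * hV s x + d / 2 * T2 s x)"
  proof -
    define z2 where "z2 = s (n, m + 1)"
    have "Re w2 \<le> cmod w2" by (rule complex_Re_le_cmod)
    also have "cmod w2 = \<bar>a\<bar> * (v * ((sqrt (real (m + 1)) * cmod z2) * cmod z1))"
      using v0 by (simp add: w2_def x b_eq norm_mult z2_def)
    also have "\<dots> \<le> \<bar>a\<bar> * (v * ((d * (sqrt (real (m + 1)) * cmod z2)\<^sup>2 + (cmod z1)\<^sup>2 / d) / 2))"
      by (intro mult_left_mono amgm_d d v0) auto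
    also have "\<dots> = \<bar>a\<bar> * (1 / (2 * d) * hV s x + d / 2 * (real (m + 1) * v * (cmod z2)\<^sup>2))"
      by (simp add: hV_def x v_def z1_def power_mult_distrib field_simps)
    also have "\<dots> \<le> \<bar>a\<bar> * (1 / (2 * d) * hV s x + d / 2 * T2 s x)"
    proof -
      have "real (m + 1) * v * (cmod z2)\<^sup>2 \<le> real (m + 1) * V (n, m + 1) * (cmod z2)\<^sup>2"
        using Vmono[of n m] by (intro mult_right_mono mult_left_mono) (auto simp: v_def)
      also have "\<dots> = T2 s x" by (simp add: T2_def mhV_def hV_def x z2_def)
      finally show ?thesis using d by (intro mult_left_mono add_left_mono) auto
    qed
    finally show ?thesis .
  qed
  show ?thesis unfolding eq using bd bb by (simp add: algebra_simps)
qed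


lemma lemmaL:
  assumes s: "s \<in> Hpq (2 * k) 2" and kap: "\<kappa> > 0"
  shows "Re (ipw V s (op_G k \<alpha> \<kappa> s)) \<le> CL k \<alpha> \<kappa> * (\<Sum>\<^sub>\<infinity>x. V x * (cmod (s x))\<^sup>2)"
proof -
  define a where "a = \<alpha> ^ k"
  define A where "A = \<bar>a\<bar>"
  have A0: "0 \<le> A" by (simp add: A_def)
  define d where "d = \<kappa> / (2 * A + 1)"
  have d0: "0 < d" using kap A0 by (simp add: d_def)
  have Ad: "A * d \<le> \<kappa> / 2"
  proof -
    have "A * d = \<kappa> * (A / (2 * A + 1))" by (simp add: d_def)
    also have "A / (2 * A + 1) \<le> 1 / 2" using A0 by (simp add: field_simps)
    hence "\<kappa> * (A / (2 * A + 1)) \<le> \<kappa> * (1 / 2)" using kap by (intro mult_left_mono) auto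
    finally show ?thesis by simp
  qed
  have sH: "s \<in> Hspace" by (rule Hpq_sub_H[OF s])
  have HP: "P1v k s \<in> Hspace" "Q1v k s \<in> Hspace" "op_bdag s \<in> Hspace" "op_b s \<in> Hspace" "op_bdag (op_b s) \<in> Hspace"
    using P1v_bound(1)[OF k1 s] Q1v_bound(1)[OF k1 s] bdag_bound(1)[OF k1 s] b_bound(1)[OF k1 s] M_bound[OF k1 s]
    by (simp_all add: Hspace_iff)
  define Rest where "Rest x = \<i> * complex_of_real a * (op_bdag s x + op_b s x) - complex_of_real (\<kappa> / 2) * op_bdag (op_b s) x" for x
  have RH: "Rest \<in> Hspace" unfolding Rest_def[abs_def] by (intro Hspace_diff Hspace_scale Hspace_add HP)
  have Geq: "op_G k \<alpha> \<kappa> s = (\<lambda>x. (- \<i>) * P1v k s x + (- \<i>) * Q1v k s x + Rest x)"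
    by (rule ext) (simp add: opG_eq Rest_def a_def algebra_simps)
  have hs: "hV s summable_on UNIV"
    by (rule summable_on_comparison_test[OF summable_on_cmult_right[OF sH[unfolded Hspace_iff], of R]])
       (use V0 VR in \<open>auto simp: hV_def intro: mult_right_mono\<close>)
  have ms: "mhV s summable_on UNIV"
  proof (rule summable_on_comparison_test[OF summable_on_cmult_right[OF hD_summable[OF s], of R]])
    fix x :: "nat \<times> nat"
    obtain n m where x: "x = (n, m)" by fastforce
    have m1: "real m \<le> wpq (2 * k) 2 (n, m)"
    proof -
      have "real m \<le> 1 + (real m)\<^sup>2"
      proof (cases "m \<le> 1")
        case True thus ?thesis by (smt (verit) of_nat_le_1_iff zero_le_power2)
      next
        case False
        hence "real m * 1 \<le> real m * real m" by (intro mult_left_mono) auto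
        thus ?thesis by (simp add: power2_eq_square)
      qed
      moreover have "0 \<le> real n ^ (2 * k)" by simp
      moreover have "wpq (2 * k) 2 (n, m) = 1 + real n ^ (2 * k) + (real m)\<^sup>2" by (simp add: wpq_def)
      ultimately show ?thesis by linarith
    qed
    have "mhV s x = (real m * V x) * (cmod (s x))\<^sup>2" by (simp add: mhV_def hV_def x)
    also have "\<dots> \<le> (wpq (2 * k) 2 (n, m) * R) * (cmod (s x))\<^sup>2"
      using V0[of x] VR[of x] m1 by (intro mult_right_mono mult_mono) auto
    finally show "mhV s x \<le> R * hD k s x" by (simp add: hD_def x algebra_simps)
    show "0 \<le> mhV s x" by (rule mhV_nonneg)
  qed
  have t1: "T1 s summable_on UNIV"
  proof (rule reindex_bound(1)[OF inj_bdag, where f="T1 s" and h="hV s" and C=1, OF _ _ _ hs hV_nonneg])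
    fix x :: "nat \<times> nat"
    obtain n m where x: "x = (n, m)" by fastforce
    show "x \<notin> {x. 1 \<le> snd x} \<Longrightarrow> T1 s x = 0" by (simp add: x T1_def)
    show "x \<in> {x. 1 \<le> snd x} \<Longrightarrow> 0 \<le> T1 s x" by (simp add: x T1_def hV_nonneg)
    show "x \<in> {x. 1 \<le> snd x} \<Longrightarrow> T1 s x \<le> 1 * hV s ((\<lambda>(n, m). (n, m - 1)) x)" by (simp add: x T1_def)
  qed simp
  have t2: "T2 s summable_on UNIV"
  proof (rule reindex_bound(1)[OF inj_b, where f="T2 s" and h="mhV s" and C=1, OF _ _ _ ms mhV_nonneg])
    fix x :: "nat \<times> nat"
    obtain n m where x: "x = (n, m)" by fastforce
    show "T2 s x \<le> 1 * mhV s ((\<lambda>(n, m). (n, m + 1)) x)" by (simp add: x T2_def)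
    show "0 \<le> T2 s x" by (simp add: T2_def mhV_nonneg)
  qed simp_all
  have t1b: "(\<Sum>\<^sub>\<infinity>x. T1 s x) \<le> 1 * (\<Sum>\<^sub>\<infinity>x. hV s x)"
  proof (rule reindex_bound(2)[OF inj_bdag, where f="T1 s" and h="hV s" and C=1, OF _ _ _ hs hV_nonneg])
    fix x :: "nat \<times> nat"
    obtain n m where x: "x = (n, m)" by fastforce
    show "x \<notin> {x. 1 \<le> snd x} \<Longrightarrow> T1 s x = 0" by (simp add: x T1_def)
    show "x \<in> {x. 1 \<le> snd x} \<Longrightarrow> 0 \<le> T1 s x" by (simp add: x T1_def hV_nonneg)
    show "x \<in> {x. 1 \<le> snd x} \<Longrightarrow> T1 s x \<le> 1 * hV s ((\<lambda>(n, m). (n, m - 1)) x)" by (simp add: x T1_def)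
  qed simp
  have t2b: "(\<Sum>\<^sub>\<infinity>x. T2 s x) \<le> 1 * (\<Sum>\<^sub>\<infinity>x. mhV s x)"
  proof (rule reindex_bound(2)[OF inj_b, where f="T2 s" and h="mhV s" and C=1, OF _ _ _ ms mhV_nonneg])
    fix x :: "nat \<times> nat"
    obtain n m where x: "x = (n, m)" by fastforce
    show "T2 s x \<le> 1 * mhV s ((\<lambda>(n, m). (n, m + 1)) x)" by (simp add: x T2_def)
    show "0 \<le> T2 s x" by (simp add: T2_def mhV_nonneg)
  qed simp_all
  have "ipw V s (op_G k \<alpha> \<kappa> s) = (- \<i>) * ipw V s (P1v k s) + (- \<i>) * ipw V s (Q1v k s) + ipw V s Rest"
    unfolding Geq by (rule ipw_lin3[OF V0 VR sH HP(1,2) RH])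
  also have "ipw V s (Q1v k s) = cnj (ipw V s (P1v k s))" by (rule pairing)
  finally have "Re (ipw V s (op_G k \<alpha> \<kappa> s)) = Re (ipw V s Rest)" by simp
  also have "\<dots> = (\<Sum>\<^sub>\<infinity>x. Re (complex_of_real (V x) * cnj (s x) * Rest x))"
    unfolding ipw_def by (rule infsum_Re[symmetric]) (rule ipw_summable(1)[OF V0 VR sH RH])
  also have "\<dots> \<le> (\<Sum>\<^sub>\<infinity>x. (A * d / 2 - \<kappa> / 2) * mhV s x + A / (2 * d) * hV s x + A * Ck k / (2 * d) * T1 s x + A * d / 2 * T2 s x)"
  proof (rule infsum_mono)
    show "(\<lambda>x. Re (complex_of_real (V x) * cnj (s x) * Rest x)) summable_on UNIV"
      by (rule summable_on_Re, rule ipw_summable(1)[OF V0 VR sH RH])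
    show "(\<lambda>x. (A * d / 2 - \<kappa> / 2) * mhV s x + A / (2 * d) * hV s x + A * Ck k / (2 * d) * T1 s x + A * d / 2 * T2 s x) summable_on UNIV"
      by (intro summable_on_add summable_on_cmult_right hs ms t1 t2)
    fix x
    show "Re (complex_of_real (V x) * cnj (s x) * Rest x) \<le> (A * d / 2 - \<kappa> / 2) * mhV s x + A / (2 * d) * hV s x + A * Ck k / (2 * d) * T1 s x + A * d / 2 * T2 s x"
      unfolding Rest_def A_def by (rule pw[OF d0])
  qed
  also have "\<dots> = (A * d / 2 - \<kappa> / 2) * (\<Sum>\<^sub>\<infinity>x. mhV s x) + A / (2 * d) * (\<Sum>\<^sub>\<infinity>x. hV s x) + A * Ck k / (2 * d) * (\<Sum>\<^sub>\<infinity>x. T1 s x) + A * d / 2 * (\<Sum>\<^sub>\<infinity>x. T2 s x)"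
    by (subst infsum_add, intro summable_on_add summable_on_cmult_right hs ms t1 t2, intro summable_on_cmult_right t2,
        subst infsum_add, intro summable_on_add summable_on_cmult_right hs ms t1, intro summable_on_cmult_right t1,
        subst infsum_add, intro summable_on_cmult_right ms, intro summable_on_cmult_right hs,
        simp only: infsum_cmult_right')
  also have "\<dots> \<le> (A * d / 2 - \<kappa> / 2) * (\<Sum>\<^sub>\<infinity>x. mhV s x) + A / (2 * d) * (\<Sum>\<^sub>\<infinity>x. hV s x) + A * Ck k / (2 * d) * (\<Sum>\<^sub>\<infinity>x. hV s x) + A * d / 2 * (\<Sum>\<^sub>\<infinity>x. mhV s x)"
  proof -
    have c3: "0 \<le> A * Ck k / (2 * d)" using A0 d0 Ck_ge[OF k1] by simp
    have c4: "0 \<le> A * d / 2" using A0 d0 by simp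
    show ?thesis using mult_left_mono[OF t1b[simplified] c3] mult_left_mono[OF t2b[simplified] c4] by linarith
  qed
  also have "\<dots> \<le> A / (2 * d) * (\<Sum>\<^sub>\<infinity>x. hV s x) + A * Ck k / (2 * d) * (\<Sum>\<^sub>\<infinity>x. hV s x)"
  proof -
    have m0: "0 \<le> (\<Sum>\<^sub>\<infinity>x. mhV s x)" by (rule infsum_nonneg) (rule mhV_nonneg)
    have "(A * d / 2 - \<kappa> / 2) + A * d / 2 \<le> 0" using Ad by simp
    hence "((A * d / 2 - \<kappa> / 2) + A * d / 2) * (\<Sum>\<^sub>\<infinity>x. mhV s x) \<le> 0"
      using m0 by (simp add: mult_nonpos_nonneg)
    thus ?thesis by (simp add: algebra_simps)
  qed
  also have "\<dots> = CL k \<alpha> \<kappa> * (\<Sum>\<^sub>\<infinity>x. V x * (cmod (s x))\<^sup>2)"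
    using d0 kap by (simp add: CL_def A_def a_def d_def hV_def[abs_def] power_abs field_simps)
  finally show ?thesis .
qed

end

lemma gronwall_right:
  fixes F :: "real \<Rightarrow> real" and K :: real
  assumes cont: "continuous_on {0..} F" and K0: "0 \<le> K" and F00: "0 \<le> F 0"
    and D: "\<And>t e. 0 \<le> t \<Longrightarrow> 0 < e \<Longrightarrow> eventually (\<lambda>h. F (t + h) \<le> F t + (K * F t + e) * h) (at_right 0)"
    and t: "0 \<le> t"
  shows "F t \<le> F 0 * exp ((K + 1) * t)"
proof -
  have main: "F t \<le> (F 0 + \<eta>) * exp ((K + 1) * t)" if eta: "0 < \<eta>" for \<eta>
  proof (rule ccontr)
    assume bad: "\<not> F t \<le> (F 0 + \<eta>) * exp ((K + 1) * t)"
    define y where "y r = (F 0 + \<eta>) * exp ((K + 1) * r)" for r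
    have ycont: "continuous_on {0..t} y" unfolding y_def[abs_def] by (intro continuous_intros)
    have Fcont: "continuous_on {0..t} F" by (rule continuous_on_subset[OF cont]) auto
    have yeta: "\<eta> \<le> y r" if "0 \<le> r" for r
    proof -
      have "1 \<le> exp ((K + 1) * r)" using that K0 by simp
      hence "(F 0 + \<eta>) * 1 \<le> (F 0 + \<eta>) * exp ((K + 1) * r)" using F00 eta by (intro mult_left_mono) auto
      thus ?thesis using F00 by (simp add: y_def)
    qed
    define B where "B = {r. 0 \<le> r \<and> r \<le> t \<and> y r < F r}"
    have tB: "t \<in> B" using bad t by (simp add: B_def y_def)
    have Bne: "B \<noteq> {}" using tB by auto
    have Bbd: "bdd_below B" by (rule bdd_belowI[of _ 0]) (auto simp: B_def)
    define \<sigma> where "\<sigma> = Inf B"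
    have s0: "0 \<le> \<sigma>" unfolding \<sigma>_def by (rule cInf_greatest[OF Bne]) (auto simp: B_def)
    have st: "\<sigma> \<le> t" unfolding \<sigma>_def by (rule cInf_lower[OF tB Bbd])
    have before: "F r \<le> y r" if "0 \<le> r" "r < \<sigma>" for r
    proof (rule ccontr)
      assume "\<not> F r \<le> y r"
      hence "r \<in> B" using that st by (auto simp: B_def)
      hence "\<sigma> \<le> r" unfolding \<sigma>_def by (rule cInf_lower[OF _ Bbd])
      thus False using that by simp
    qed
    have Fs: "F \<sigma> \<le> y \<sigma>"
    proof (cases "\<sigma> = 0")
      case True thus ?thesis using eta by (simp add: y_def)
    next
      case False
      hence sp: "0 < \<sigma>" using s0 by simp
      define C where "C = {r \<in> {0..t}. F r \<le> y r}"
      have cl: "closed C" unfolding C_def by (rule continuous_on_closed_Collect_le[OF Fcont ycont]) simp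
      have "{0..<\<sigma>} \<subseteq> C" using before st by (auto simp: C_def)
      hence "closure {0..<\<sigma>} \<subseteq> C" using cl by (simp add: closure_minimal)
      hence "{0..\<sigma>} \<subseteq> C" using sp by simp
      thus ?thesis using s0 by (auto simp: C_def)
    qed
    obtain b where b0: "0 < b" and bD: "\<And>h. 0 < h \<Longrightarrow> h < b \<Longrightarrow> F (\<sigma> + h) \<le> F \<sigma> + (K * F \<sigma> + \<eta>) * h"
      using D[OF s0 eta] unfolding eventually_at_right_field by auto
    have after: "F (\<sigma> + h) \<le> y (\<sigma> + h)" if "0 < h" "h < b" for h
    proof -
      have "F (\<sigma> + h) \<le> F \<sigma> + (K * F \<sigma> + \<eta>) * h" by (rule bD[OF that])
      also have "\<dots> \<le> y \<sigma> + (K * y \<sigma> + \<eta>) * h"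
        using Fs K0 that by (intro add_mono mult_right_mono mult_left_mono) auto
      also have "\<dots> \<le> y \<sigma> + (K * y \<sigma> + y \<sigma>) * h"
        using yeta[OF s0] that by (intro add_left_mono mult_right_mono) auto
      also have "\<dots> = y \<sigma> * (1 + (K + 1) * h)" by (simp add: algebra_simps)
      also have "\<dots> \<le> y \<sigma> * exp ((K + 1) * h)"
        using yeta[OF s0] eta by (intro mult_left_mono exp_ge_add_one_self) auto
      also have "\<dots> = y (\<sigma> + h)" by (simp add: y_def distrib_left exp_add)
      finally show ?thesis .
    qed
    obtain c where cB: "c \<in> B" and cl: "c < \<sigma> + b"
      using cInf_lessD[OF Bne, of "\<sigma> + b"] b0 unfolding \<sigma>_def by auto
    have "\<sigma> \<le> c" unfolding \<sigma>_def by (rule cInf_lower[OF cB Bbd])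
    moreover have "c \<noteq> \<sigma>" using cB Fs by (auto simp: B_def)
    ultimately have "0 < c - \<sigma>" by simp
    hence "F (\<sigma> + (c - \<sigma>)) \<le> y (\<sigma> + (c - \<sigma>))" using cl by (intro after) auto
    thus False using cB by (simp add: B_def)
  qed
  show ?thesis
  proof (rule field_le_epsilon)
    fix e :: real assume e: "0 < e"
    define E where "E = exp ((K + 1) * t)"
    have E0: "0 < E" by (simp add: E_def)
    have "F t \<le> (F 0 + e / E) * E" using main[of "e / E"] e E0 by (simp add: E_def)
    also have "\<dots> = F 0 * E + e" using E0 by (simp add: field_simps)
    finally show "F t \<le> F 0 * exp ((K + 1) * t) + e" by (simp add: E_def)
  qed
qed

lemma cmod_add_sq: "(cmod (a + b))\<^sup>2 = (cmod a)\<^sup>2 + 2 * Re (cnj a * b) + (cmod b)\<^sup>2"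
  unfolding cmod_power2 by (simp add: power2_eq_square algebra_simps)

lemma wV_summable:
  assumes V: "\<And>x. 0 \<le> V x" "\<And>x. V x \<le> R" and a: "a \<in> Hspace"
  shows "(\<lambda>x. V x * (cmod (a x))\<^sup>2) summable_on UNIV"
  by (rule summable_on_comparison_test[OF summable_on_cmult_right[OF a[unfolded Hspace_iff], of R]])
     (use V in \<open>auto intro: mult_right_mono\<close>)

lemma wV_le:
  assumes V: "\<And>x. 0 \<le> V x" "\<And>x. V x \<le> R" and a: "a \<in> Hspace"
  shows "(\<Sum>\<^sub>\<infinity>x. V x * (cmod (a x))\<^sup>2) \<le> R * (Hnorm a)\<^sup>2"
proof -
  have "(\<Sum>\<^sub>\<infinity>x. V x * (cmod (a x))\<^sup>2) \<le> (\<Sum>\<^sub>\<infinity>x. R * (cmod (a x))\<^sup>2)"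
    by (rule infsum_mono[OF wV_summable[OF V a] summable_on_cmult_right[OF a[unfolded Hspace_iff]]])
       (use V in \<open>auto intro: mult_right_mono\<close>)
  also have "\<dots> = R * (Hnorm a)\<^sup>2" by (simp add: infsum_cmult_right' Hnorm_sq[OF a])
  finally show ?thesis .
qed

lemma expand:
  assumes V: "\<And>x. 0 \<le> V x" "\<And>x. V x \<le> R" and u: "u \<in> Hspace" and w: "w \<in> Hspace"
  shows "(\<Sum>\<^sub>\<infinity>x. V x * (cmod (u x + complex_of_real h * w x))\<^sup>2)
       = (\<Sum>\<^sub>\<infinity>x. V x * (cmod (u x))\<^sup>2) + 2 * h * Re (ipw V u w) + h\<^sup>2 * (\<Sum>\<^sub>\<infinity>x. V x * (cmod (w x))\<^sup>2)"
proof -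
  note s1 = wV_summable[OF V u] and s3 = wV_summable[OF V w]
  have s2: "(\<lambda>x. Re (complex_of_real (V x) * cnj (u x) * w x)) summable_on UNIV"
    by (rule summable_on_Re[OF ipw_summable(1)[OF V u w]])
  have "(\<Sum>\<^sub>\<infinity>x. V x * (cmod (u x + complex_of_real h * w x))\<^sup>2)
     = (\<Sum>\<^sub>\<infinity>x. V x * (cmod (u x))\<^sup>2 + (2 * h) * Re (complex_of_real (V x) * cnj (u x) * w x) + h\<^sup>2 * (V x * (cmod (w x))\<^sup>2))"
  proof (rule infsum_cong)
    fix x
    have "Re (cnj (u x) * (complex_of_real h * w x)) = h * Re (cnj (u x) * w x)" by (simp add: algebra_simps)
    moreover have "Re (complex_of_real (V x) * cnj (u x) * w x) = V x * Re (cnj (u x) * w x)"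
      by (simp add: mult.assoc)
    ultimately show "V x * (cmod (u x + complex_of_real h * w x))\<^sup>2
      = V x * (cmod (u x))\<^sup>2 + (2 * h) * Re (complex_of_real (V x) * cnj (u x) * w x) + h\<^sup>2 * (V x * (cmod (w x))\<^sup>2)"
      by (simp add: cmod_add_sq norm_mult power_mult_distrib algebra_simps)
  qed
  also have "\<dots> = (\<Sum>\<^sub>\<infinity>x. V x * (cmod (u x))\<^sup>2) + (2 * h) * (\<Sum>\<^sub>\<infinity>x. Re (complex_of_real (V x) * cnj (u x) * w x)) + h\<^sup>2 * (\<Sum>\<^sub>\<infinity>x. V x * (cmod (w x))\<^sup>2)"
    by (subst infsum_add, intro summable_on_add summable_on_cmult_right s1 s2, intro summable_on_cmult_right s3,
        subst infsum_add, rule s1, intro summable_on_cmult_right s2, simp only: infsum_cmult_right')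
  also have "(\<Sum>\<^sub>\<infinity>x. Re (complex_of_real (V x) * cnj (u x) * w x)) = Re (ipw V u w)"
    unfolding ipw_def by (rule infsum_Re[OF ipw_summable(1)[OF V u w]])
  finally show ?thesis by simp
qed

lemma ipw_diff2:
  assumes V: "\<And>x. 0 \<le> V x" "\<And>x. V x \<le> R" and H: "u \<in> Hspace" "a \<in> Hspace" "b \<in> Hspace"
  shows "ipw V u a - ipw V u b = ipw V u (\<lambda>x. a x - b x)"
proof -
  have "ipw V u a - ipw V u b = (\<Sum>\<^sub>\<infinity>x. complex_of_real (V x) * cnj (u x) * a x - complex_of_real (V x) * cnj (u x) * b x)"
    unfolding ipw_def by (rule infsum_diff_c[symmetric]) (intro ipw_summable(1)[OF V] H)+
  also have "\<dots> = ipw V u (\<lambda>x. a x - b x)" unfolding ipw_def by (rule infsum_cong) (simp add: algebra_simps)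
  finally show ?thesis .
qed

lemma Hnorm_zero: "Hnorm (\<lambda>x. 0) = 0" by (simp add: Hnorm_eq)

locale SG =
  fixes k :: nat and \<alpha> \<kappa> :: real and T :: "real \<Rightarrow> fock \<Rightarrow> fock"
  assumes k1: "k \<ge> 1" and kap: "\<kappa> > 0" and C0: "C0_contraction_semigroup T"
    and gen: "generator_graph T (closure_graph (Hpq (2 * k) 2) (op_G k \<alpha> \<kappa>))"
begin

lemma T_H: "0 \<le> t \<Longrightarrow> \<psi> \<in> Hspace \<Longrightarrow> T t \<psi> \<in> Hspace"
  using C0 unfolding C0_contraction_semigroup_def by blast
lemma T_lin: "0 \<le> t \<Longrightarrow> \<psi> \<in> Hspace \<Longrightarrow> \<phi> \<in> Hspace \<Longrightarrow> T t (\<lambda>x. c * \<psi> x + \<phi> x) = (\<lambda>x. c * T t \<psi> x + T t \<phi> x)"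
  using C0 unfolding C0_contraction_semigroup_def by blast
lemma T_0: "\<psi> \<in> Hspace \<Longrightarrow> T 0 \<psi> = \<psi>"
  using C0 unfolding C0_contraction_semigroup_def by blast
lemma T_semi: "0 \<le> s \<Longrightarrow> 0 \<le> t \<Longrightarrow> \<psi> \<in> Hspace \<Longrightarrow> T (s + t) \<psi> = T s (T t \<psi>)"
  using C0 unfolding C0_contraction_semigroup_def by blast
lemma T_contr: "0 \<le> t \<Longrightarrow> \<psi> \<in> Hspace \<Longrightarrow> Hnorm (T t \<psi>) \<le> Hnorm \<psi>"
  using C0 unfolding C0_contraction_semigroup_def by blast
lemma T_cont: "\<psi> \<in> Hspace \<Longrightarrow> 0 \<le> t \<Longrightarrow> ((\<lambda>s. Hnorm (\<lambda>x. T s \<psi> x - T t \<psi> x)) \<longlongrightarrow> 0) (at t within {0..})"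
  using C0 unfolding C0_contraction_semigroup_def by blast

lemma T_zero: "0 \<le> t \<Longrightarrow> T t (\<lambda>x. 0) = (\<lambda>x. 0)"
  using T_lin[of t "\<lambda>x. 0" "\<lambda>x. 0" "-1"] Hspace_zero by simp

lemma T_scale: "0 \<le> t \<Longrightarrow> \<psi> \<in> Hspace \<Longrightarrow> T t (\<lambda>x. c * \<psi> x) = (\<lambda>x. c * T t \<psi> x)"
  using T_lin[of t \<psi> "\<lambda>x. 0" c] Hspace_zero T_zero by simp

lemma T_diff: "0 \<le> t \<Longrightarrow> a \<in> Hspace \<Longrightarrow> b \<in> Hspace \<Longrightarrow> T t (\<lambda>x. a x - b x) = (\<lambda>x. T t a x - T t b x)"
  using T_lin[of t b a "-1"] by simp

lemma T_quot:
  assumes t: "0 \<le> t" and H: "a \<in> Hspace" "b \<in> Hspace" "d \<in> Hspace"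
  shows "T t (\<lambda>x. (a x - b x) / complex_of_real h - d x) = (\<lambda>x. (T t a x - T t b x) / complex_of_real h - T t d x)"
proof -
  have ab: "(\<lambda>x. a x - b x) \<in> Hspace" by (rule Hspace_diff[OF H(1,2)])
  have abs: "(\<lambda>x. inverse (complex_of_real h) * (a x - b x)) \<in> Hspace" by (rule Hspace_scale[OF ab])
  have "T t (\<lambda>x. (a x - b x) / complex_of_real h - d x) = T t (\<lambda>x. inverse (complex_of_real h) * (a x - b x) - d x)"
    by (simp add: divide_inverse mult.commute)
  also have "\<dots> = (\<lambda>x. T t (\<lambda>x. inverse (complex_of_real h) * (a x - b x)) x - T t d x)"
    by (rule T_diff[OF t abs H(3)])
  also have "T t (\<lambda>x. inverse (complex_of_real h) * (a x - b x)) = (\<lambda>x. inverse (complex_of_real h) * T t (\<lambda>x. a x - b x) x)"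
    by (rule T_scale[OF t ab])
  also have "T t (\<lambda>x. a x - b x) = (\<lambda>x. T t a x - T t b x)" by (rule T_diff[OF t H(1,2)])
  finally show ?thesis by (simp add: divide_inverse mult.commute)
qed

lemma D_H: "\<psi> \<in> Hpq (2 * k) 2 \<Longrightarrow> \<psi> \<in> Hspace" by (rule Hpq_sub_H)

lemma D_Gr: "\<psi> \<in> Hpq (2 * k) 2 \<Longrightarrow> (\<psi>, op_G k \<alpha> \<kappa> \<psi>) \<in> closure_graph (Hpq (2 * k) 2) (op_G k \<alpha> \<kappa>)"
  unfolding closure_graph_def using D_H G_in_H[OF k1] by (auto intro!: exI[of _ "\<lambda>j. \<psi>"] simp: Hnorm_zero)

lemma Gr_lim: "(\<psi>, \<phi>) \<in> closure_graph (Hpq (2 * k) 2) (op_G k \<alpha> \<kappa>) \<Longrightarrow>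
   ((\<lambda>h. Hnorm (\<lambda>x. (T h \<psi> x - \<psi> x) / complex_of_real h - \<phi> x)) \<longlongrightarrow> 0) (at_right 0)"
  using gen unfolding generator_graph_def by blast

lemma orbit:
  assumes \<psi>: "\<psi> \<in> Hpq (2 * k) 2" and t: "0 \<le> t"
  shows "((\<lambda>h. Hnorm (\<lambda>x. (T (t + h) \<psi> x - T t \<psi> x) / complex_of_real h - T t (op_G k \<alpha> \<kappa> \<psi>) x)) \<longlongrightarrow> 0) (at_right 0)"
    and "(T t \<psi>, T t (op_G k \<alpha> \<kappa> \<psi>)) \<in> closure_graph (Hpq (2 * k) 2) (op_G k \<alpha> \<kappa>)"
proof -
  have pH: "\<psi> \<in> Hspace" by (rule D_H[OF \<psi>])
  have gH: "op_G k \<alpha> \<kappa> \<psi> \<in> Hspace" by (rule G_in_H[OF k1 \<psi>])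
  note L0 = Gr_lim[OF D_Gr[OF \<psi>]]
  have eq: "(\<lambda>x. (T (t + h) \<psi> x - T t \<psi> x) / complex_of_real h - T t (op_G k \<alpha> \<kappa> \<psi>) x)
          = T t (\<lambda>x. (T h \<psi> x - \<psi> x) / complex_of_real h - op_G k \<alpha> \<kappa> \<psi> x)" if h: "0 < h" for h
  proof -
    have "T (t + h) \<psi> = T t (T h \<psi>)" using T_semi[OF t _ pH, of h] h by simp
    thus ?thesis using T_quot[OF t T_H[OF _ pH, of h] pH gH, of h] h by simp
  qed
  have ev: "eventually (\<lambda>h. norm (Hnorm (\<lambda>x. (T (t + h) \<psi> x - T t \<psi> x) / complex_of_real h - T t (op_G k \<alpha> \<kappa> \<psi>) x))
       \<le> Hnorm (\<lambda>x. (T h \<psi> x - \<psi> x) / complex_of_real h - op_G k \<alpha> \<kappa> \<psi> x)) (at_right 0)"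
  proof (rule eventually_mono[OF eventually_at_right_less])
    fix h :: real assume h: "0 < h"
    have inH: "(\<lambda>x. (T h \<psi> x - \<psi> x) / complex_of_real h - op_G k \<alpha> \<kappa> \<psi> x) \<in> Hspace"
      using Hspace_diff[OF Hspace_scale[OF Hspace_diff[OF T_H[OF _ pH, of h] pH], of "inverse (complex_of_real h)"] gH] h
      by (simp add: divide_inverse mult.commute)
    show "norm (Hnorm (\<lambda>x. (T (t + h) \<psi> x - T t \<psi> x) / complex_of_real h - T t (op_G k \<alpha> \<kappa> \<psi>) x))
       \<le> Hnorm (\<lambda>x. (T h \<psi> x - \<psi> x) / complex_of_real h - op_G k \<alpha> \<kappa> \<psi> x)"
      unfolding eq[OF h] using T_contr[OF t inH] Hnorm_nonneg by simp
  qed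
  show L1: "((\<lambda>h. Hnorm (\<lambda>x. (T (t + h) \<psi> x - T t \<psi> x) / complex_of_real h - T t (op_G k \<alpha> \<kappa> \<psi>) x)) \<longlongrightarrow> 0) (at_right 0)"
    by (rule Lim_null_comparison[OF ev L0])
  have "((\<lambda>h. Hnorm (\<lambda>x. (T h (T t \<psi>) x - T t \<psi> x) / complex_of_real h - T t (op_G k \<alpha> \<kappa> \<psi>) x)) \<longlongrightarrow> 0) (at_right 0)"
  proof (rule tendsto_cong[THEN iffD1, OF _ L1])
    show "\<forall>\<^sub>F h in at_right 0. Hnorm (\<lambda>x. (T (t + h) \<psi> x - T t \<psi> x) / complex_of_real h - T t (op_G k \<alpha> \<kappa> \<psi>) x) =
          Hnorm (\<lambda>x. (T h (T t \<psi>) x - T t \<psi> x) / complex_of_real h - T t (op_G k \<alpha> \<kappa> \<psi>) x)"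
    proof (rule eventually_mono[OF eventually_at_right_less])
      fix h :: real assume h: "0 < h"
      have "T (h + t) \<psi> = T h (T t \<psi>)" using T_semi[OF _ t pH, of h] h by simp
      thus "Hnorm (\<lambda>x. (T (t + h) \<psi> x - T t \<psi> x) / complex_of_real h - T t (op_G k \<alpha> \<kappa> \<psi>) x) =
          Hnorm (\<lambda>x. (T h (T t \<psi>) x - T t \<psi> x) / complex_of_real h - T t (op_G k \<alpha> \<kappa> \<psi>) x)"
        by (simp add: add.commute)
    qed
  qed
  thus "(T t \<psi>, T t (op_G k \<alpha> \<kappa> \<psi>)) \<in> closure_graph (Hpq (2 * k) 2) (op_G k \<alpha> \<kappa>)"
    using gen T_H[OF t pH] T_H[OF t gH] unfolding generator_graph_def by blast
qed

end

context SG begin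

lemma closure_est:
  assumes VW: "Vweight k V R" and uv: "(u, v) \<in> closure_graph (Hpq (2 * k) 2) (op_G k \<alpha> \<kappa>)"
  shows "Re (ipw V u v) \<le> CL k \<alpha> \<kappa> * (\<Sum>\<^sub>\<infinity>x. V x * (cmod (u x))\<^sup>2)"
proof -
  have V0: "\<And>x. 0 \<le> V x" and VR: "\<And>x. V x \<le> R" using Vweight.V0[OF VW] Vweight.VR[OF VW] by auto
  obtain sq where uH: "u \<in> Hspace" and vH: "v \<in> Hspace" and sqD: "\<And>j. sq j \<in> Hpq (2 * k) 2"
    and la: "(\<lambda>j. Hnorm (\<lambda>x. sq j x - u x)) \<longlonglongrightarrow> 0"
    and lb: "(\<lambda>j. Hnorm (\<lambda>x. op_G k \<alpha> \<kappa> (sq j) x - v x)) \<longlonglongrightarrow> 0"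
    using uv unfolding closure_graph_def by blast
  have Hj: "\<forall>\<^sub>F j in sequentially. sq j \<in> Hspace \<and> op_G k \<alpha> \<kappa> (sq j) \<in> Hspace"
    using D_H[OF sqD] G_in_H[OF k1 sqD] by simp
  have Hj2: "\<forall>\<^sub>F j in sequentially. sq j \<in> Hspace \<and> sq j \<in> Hspace"
    using D_H[OF sqD] by simp
  have l1: "(\<lambda>j. Re (ipw V (sq j) (op_G k \<alpha> \<kappa> (sq j)))) \<longlonglongrightarrow> Re (ipw V u v)"
    by (rule tendsto_Re, rule ipw_tendsto[OF V0 VR uH vH Hj la lb])
  have l2: "(\<lambda>j. CL k \<alpha> \<kappa> * Re (ipw V (sq j) (sq j))) \<longlonglongrightarrow> CL k \<alpha> \<kappa> * Re (ipw V u u)"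
    by (rule tendsto_mult_left, rule tendsto_Re, rule ipw_tendsto[OF V0 VR uH uH Hj2 la la])
  have "Re (ipw V u v) \<le> CL k \<alpha> \<kappa> * Re (ipw V u u)"
  proof (rule tendsto_le[OF trivial_limit_sequentially l2 l1 always_eventually], rule allI)
    fix j
    show "Re (ipw V (sq j) (op_G k \<alpha> \<kappa> (sq j))) \<le> CL k \<alpha> \<kappa> * Re (ipw V (sq j) (sq j))"
      using Vweight.lemmaL[OF VW sqD kap, where \<alpha>=\<alpha>] by (simp add: ipw_self)
  qed
  thus ?thesis by (simp add: ipw_self)
qed

lemma CL_nonneg: "0 \<le> CL k \<alpha> \<kappa>"
  unfolding CL_def using kap Ck_ge[OF k1] by (intro divide_nonneg_pos mult_nonneg_nonneg) auto

lemma dini: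
  assumes VW: "Vweight k V R" and \<psi>: "\<psi> \<in> Hpq (2 * k) 2" and t: "0 \<le> t" and e: "0 < e"
  shows "eventually (\<lambda>h. (\<Sum>\<^sub>\<infinity>x. V x * (cmod (T (t + h) \<psi> x))\<^sup>2)
      \<le> (\<Sum>\<^sub>\<infinity>x. V x * (cmod (T t \<psi> x))\<^sup>2) + (2 * CL k \<alpha> \<kappa> * (\<Sum>\<^sub>\<infinity>x. V x * (cmod (T t \<psi> x))\<^sup>2) + e) * h) (at_right 0)"
proof -
  have V0: "\<And>x. 0 \<le> V x" and VR: "\<And>x. V x \<le> R" using Vweight.V0[OF VW] Vweight.VR[OF VW] by auto
  have R0: "0 \<le> R" using V0[of undefined] VR[of undefined] by linarith
  have pH: "\<psi> \<in> Hspace" by (rule D_H[OF \<psi>])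
  define u where "u = T t \<psi>"
  define v where "v = T t (op_G k \<alpha> \<kappa> \<psi>)"
  define w where "w h = (\<lambda>x. (T (t + h) \<psi> x - u x) / complex_of_real h)" for h
  define Fu where "Fu = (\<Sum>\<^sub>\<infinity>x. V x * (cmod (u x))\<^sup>2)"
  have uH: "u \<in> Hspace" unfolding u_def by (rule T_H[OF t pH])
  have vH: "v \<in> Hspace" unfolding v_def by (rule T_H[OF t G_in_H[OF k1 \<psi>]])
  have wH: "w h \<in> Hspace" if "0 < h" for h
    using Hspace_scale[OF Hspace_diff[OF T_H[OF _ pH, of "t + h"] uH], of "inverse (complex_of_real h)"] that t
    by (simp add: w_def divide_inverse mult.commute)
  have L: "((\<lambda>h. Hnorm (\<lambda>x. w h x - v x)) \<longlongrightarrow> 0) (at_right 0)"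
    using orbit(1)[OF \<psi> t] by (simp add: w_def u_def v_def)
  have cl: "Re (ipw V u v) \<le> CL k \<alpha> \<kappa> * Fu"
    unfolding Fu_def u_def v_def by (rule closure_est[OF VW orbit(2)[OF \<psi> t]])
  define E where "E h = 2 * R * Hnorm u * Hnorm (\<lambda>x. w h x - v x) + h * R * (Hnorm v + Hnorm (\<lambda>x. w h x - v x))\<^sup>2" for h
  have "(E \<longlongrightarrow> 2 * R * Hnorm u * 0 + 0 * R * (Hnorm v + 0)\<^sup>2) (at_right 0)"
    unfolding E_def[abs_def]
    by (rule tendsto_add[OF tendsto_mult[OF tendsto_const L]
           tendsto_mult[OF tendsto_mult[OF tendsto_ident_at tendsto_const] tendsto_power[OF tendsto_add[OF tendsto_const L]]]])
  hence EL: "(E \<longlongrightarrow> 0) (at_right 0)" by simp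
  have ev: "eventually (\<lambda>h. E h < e \<and> 0 < h) (at_right 0)"
    using order_tendstoD(2)[OF EL e] eventually_at_right_less by (rule eventually_conj)
  show ?thesis
  proof (rule eventually_mono[OF ev])
    fix h :: real assume hh: "E h < e \<and> 0 < h"
    hence h: "0 < h" and Eh: "E h < e" by auto
    have Tu: "T (t + h) \<psi> = (\<lambda>x. u x + complex_of_real h * w h x)"
      using h by (simp add: w_def)
    have wv: "(\<lambda>x. w h x - v x) \<in> Hspace" by (rule Hspace_diff[OF wH[OF h] vH])
    have exp: "(\<Sum>\<^sub>\<infinity>x. V x * (cmod (T (t + h) \<psi> x))\<^sup>2) = Fu + 2 * h * Re (ipw V u (w h)) + h\<^sup>2 * (\<Sum>\<^sub>\<infinity>x. V x * (cmod (w h x))\<^sup>2)"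
      unfolding Tu Fu_def by (rule expand[OF V0 VR uH wH[OF h]])
    have r1: "Re (ipw V u (w h)) \<le> CL k \<alpha> \<kappa> * Fu + R * (Hnorm u * Hnorm (\<lambda>x. w h x - v x))"
    proof -
      have "ipw V u (w h) = ipw V u v + ipw V u (\<lambda>x. w h x - v x)"
        using ipw_diff2[OF V0 VR uH wH[OF h] vH] by (simp add: algebra_simps)
      hence "Re (ipw V u (w h)) = Re (ipw V u v) + Re (ipw V u (\<lambda>x. w h x - v x))" by simp
      also have "Re (ipw V u (\<lambda>x. w h x - v x)) \<le> cmod (ipw V u (\<lambda>x. w h x - v x))" by (rule complex_Re_le_cmod)
      also have "\<dots> \<le> R * (Hnorm u * Hnorm (\<lambda>x. w h x - v x))" by (rule ipw_summable(3)[OF V0 VR uH wv])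
      finally show ?thesis using cl by linarith
    qed
    have r2: "(\<Sum>\<^sub>\<infinity>x. V x * (cmod (w h x))\<^sup>2) \<le> R * (Hnorm v + Hnorm (\<lambda>x. w h x - v x))\<^sup>2"
    proof -
      have "Hnorm (w h) \<le> Hnorm v + Hnorm (\<lambda>x. w h x - v x)"
        using Hnorm_triangle[OF vH wv] by simp
      hence "(Hnorm (w h))\<^sup>2 \<le> (Hnorm v + Hnorm (\<lambda>x. w h x - v x))\<^sup>2"
        using Hnorm_nonneg[of "w h"] by (simp add: power_mono)
      thus ?thesis using wV_le[OF V0 VR wH[OF h]] R0 by (meson mult_left_mono order_trans)
    qed
    have "(\<Sum>\<^sub>\<infinity>x. V x * (cmod (T (t + h) \<psi> x))\<^sup>2) \<le> Fu + 2 * h * (CL k \<alpha> \<kappa> * Fu + R * (Hnorm u * Hnorm (\<lambda>x. w h x - v x))) + h\<^sup>2 * (R * (Hnorm v + Hnorm (\<lambda>x. w h x - v x))\<^sup>2)"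
      unfolding exp using r1 r2 h by (intro add_mono mult_left_mono) auto
    also have "\<dots> = Fu + (2 * CL k \<alpha> \<kappa> * Fu + E h) * h"
      by (simp add: E_def power2_eq_square algebra_simps)
    also have "\<dots> \<le> Fu + (2 * CL k \<alpha> \<kappa> * Fu + e) * h" using Eh h by (intro add_left_mono mult_right_mono) auto
    finally show "(\<Sum>\<^sub>\<infinity>x. V x * (cmod (T (t + h) \<psi> x))\<^sup>2)
      \<le> (\<Sum>\<^sub>\<infinity>x. V x * (cmod (T t \<psi> x))\<^sup>2) + (2 * CL k \<alpha> \<kappa> * (\<Sum>\<^sub>\<infinity>x. V x * (cmod (T t \<psi> x))\<^sup>2) + e) * h"
      by (simp add: Fu_def u_def)
  qed
qed

lemma Fv_cont:
  assumes V: "\<And>x. 0 \<le> V x" "\<And>x. V x \<le> R" and pH: "\<psi> \<in> Hspace"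
  shows "continuous_on {0..} (\<lambda>r. (\<Sum>\<^sub>\<infinity>x. V x * (cmod (T r \<psi> x))\<^sup>2))"
  unfolding continuous_on_def
proof (intro ballI)
  fix t :: real assume "t \<in> {0..}"
  hence t: "0 \<le> t" by simp
  have ev: "\<forall>\<^sub>F r in at t within {0..}. T r \<psi> \<in> Hspace \<and> T r \<psi> \<in> Hspace"
    unfolding eventually_at using T_H[OF _ pH] by (auto intro!: exI[of _ 1])
  have "((\<lambda>r. Re (ipw V (T r \<psi>) (T r \<psi>))) \<longlongrightarrow> Re (ipw V (T t \<psi>) (T t \<psi>))) (at t within {0..})"
    by (rule tendsto_Re, rule ipw_tendsto[OF V T_H[OF t pH] T_H[OF t pH] ev T_cont[OF pH t] T_cont[OF pH t]])
  thus "((\<lambda>r. \<Sum>\<^sub>\<infinity>x. V x * (cmod (T r \<psi> x))\<^sup>2) \<longlongrightarrow> (\<Sum>\<^sub>\<infinity>x. V x * (cmod (T t \<psi> x))\<^sup>2)) (at t within {0..})"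
    by (simp add: ipw_self)
qed

lemma growth:
  assumes VW: "Vweight k V R" and \<psi>: "\<psi> \<in> Hpq (2 * k) 2" and t: "0 \<le> t"
  shows "(\<Sum>\<^sub>\<infinity>x. V x * (cmod (T t \<psi> x))\<^sup>2) \<le> (\<Sum>\<^sub>\<infinity>x. V x * (cmod (\<psi> x))\<^sup>2) * exp ((2 * CL k \<alpha> \<kappa> + 1) * t)"
proof -
  have V0: "\<And>x. 0 \<le> V x" and VR: "\<And>x. V x \<le> R" using Vweight.V0[OF VW] Vweight.VR[OF VW] by auto
  have pH: "\<psi> \<in> Hspace" by (rule D_H[OF \<psi>])
  have K0: "0 \<le> 2 * CL k \<alpha> \<kappa>" using CL_nonneg by simp
  have F00: "0 \<le> (\<Sum>\<^sub>\<infinity>x. V x * (cmod (T 0 \<psi> x))\<^sup>2)" by (rule infsum_nonneg) (simp add: V0)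
  have "(\<Sum>\<^sub>\<infinity>x. V x * (cmod (T t \<psi> x))\<^sup>2) \<le> (\<Sum>\<^sub>\<infinity>x. V x * (cmod (T 0 \<psi> x))\<^sup>2) * exp ((2 * CL k \<alpha> \<kappa> + 1) * t)"
    by (rule gronwall_right[where F="\<lambda>r. (\<Sum>\<^sub>\<infinity>x. V x * (cmod (T r \<psi> x))\<^sup>2)", OF Fv_cont[OF V0 VR pH] K0 F00 _ t])
       (rule dini[OF VW \<psi>], auto simp: mult.assoc)
  thus ?thesis using T_0[OF pH] by simp
qed

end

definition Wt :: "nat \<Rightarrow> nat \<times> nat \<Rightarrow> real" where
  "Wt k x = (1 + real (fst x) + real k * real (snd x)) ^ (2 * k)"

definition VRw :: "nat \<Rightarrow> real \<Rightarrow> nat \<times> nat \<Rightarrow> real" where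
  "VRw k R x = min (Wt k x) R"

lemma Wt_nonneg: "0 \<le> Wt k x" by (simp add: Wt_def)

lemma Wt_ge1: "1 \<le> Wt k x" by (simp add: Wt_def one_le_power)

lemma Vw_inst:
  assumes k: "k \<ge> 1" and R: "0 \<le> R"
  shows "Vweight k (VRw k R) R"
proof
  show "k \<ge> 1" by (rule k)
  fix x show "0 \<le> VRw k R x" using R Wt_nonneg[of k x] by (simp add: VRw_def)
  show "VRw k R x \<le> R" by (simp add: VRw_def)
next
  fix n m
  show "VRw k R (n + k, m) = VRw k R (n, m + 1)" by (simp add: VRw_def Wt_def algebra_simps)
  show "VRw k R (n, m) \<le> VRw k R (n, m + 1)"
  proof -
    have "Wt k (n, m) \<le> Wt k (n, m + 1)" unfolding Wt_def by (intro power_mono) (auto simp: algebra_simps)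
    thus ?thesis by (simp add: VRw_def min_le_iff_disj)
  qed
  show "VRw k R (n, m + 1) \<le> Ck k * VRw k R (n, m)"
  proof -
    define b where "b = 1 + real n + real k * real m"
    have b1: "1 \<le> b" by (simp add: b_def)
    have C1: "1 \<le> Ck k" using Ck_ge[OF k] by simp
    have "b + real k \<le> (1 + real k) * b" using mult_right_mono[of 1 b "real k"] b1 by (simp add: algebra_simps)
    hence "(b + real k) ^ (2 * k) \<le> ((1 + real k) * b) ^ (2 * k)" using b1 by (intro power_mono) auto
    moreover have e1: "Wt k (n, m + 1) = (b + real k) ^ (2 * k)" by (simp add: Wt_def b_def algebra_simps)
    moreover have e2: "Wt k (n, m) = b ^ (2 * k)" by (simp add: Wt_def b_def)
    ultimately have Wg: "Wt k (n, m + 1) \<le> Ck k * Wt k (n, m)"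
      by (simp add: Ck_def power_mult_distrib)
    show ?thesis
    proof (cases "Wt k (n, m) \<le> R")
      case True
      have "VRw k R (n, m + 1) \<le> Wt k (n, m + 1)" by (simp add: VRw_def)
      also have "\<dots> \<le> Ck k * Wt k (n, m)" by (rule Wg)
      finally show ?thesis using True by (simp add: VRw_def)
    next
      case False
      have "VRw k R (n, m + 1) \<le> R" by (simp add: VRw_def)
      also have "\<dots> \<le> Ck k * R" using C1 R by (simp add: mult_le_cancel_right1)
      finally show ?thesis using False by (simp add: VRw_def)
    qed
  qed
qed

lemma wpq_le_Wt:
  assumes k: "k \<ge> 1"
  shows "wpq (2 * k) (2 * k) x \<le> 3 * Wt k x"
proof -
  obtain n m where x: "x = (n, m)" by fastforce
  define b where "b = 1 + real n + real k * real m"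
  have W: "Wt k (n, m) = b ^ (2 * k)" by (simp add: Wt_def b_def)
  have wq: "wpq (2 * k) (2 * k) (n, m) = 1 + real n ^ (2 * k) + real m ^ (2 * k)" by (simp add: wpq_def)
  have "1 \<le> b ^ (2 * k)" by (simp add: b_def one_le_power)
  moreover have "real n ^ (2 * k) \<le> b ^ (2 * k)" by (intro power_mono) (auto simp: b_def)
  moreover have "real m ^ (2 * k) \<le> b ^ (2 * k)"
  proof (intro power_mono)
    have "real m * 1 \<le> real m * real k" using k by (intro mult_left_mono) auto
    thus "real m \<le> b" by (simp add: b_def algebra_simps)
  qed simp
  ultimately show ?thesis unfolding x W wq by linarith
qed

definition cW :: "nat \<Rightarrow> real" where "cW k = (3 * real k) ^ (2 * k)"

lemma Wt_le_wpq:
  assumes k: "k \<ge> 1"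
  shows "Wt k x \<le> cW k * wpq (2 * k) (2 * k) x"
proof -
  obtain n m where x: "x = (n, m)" by fastforce
  define M where "M = max 1 (max (real n) (real k * real m))"
  have M1: "1 \<le> M" by (simp add: M_def)
  have "1 + real n + real k * real m \<le> 3 * M" by (simp add: M_def)
  hence "Wt k x \<le> (3 * M) ^ (2 * k)" unfolding Wt_def x by (intro power_mono) auto
  also have "\<dots> = 3 ^ (2 * k) * M ^ (2 * k)" by (simp add: power_mult_distrib)
  also have "M ^ (2 * k) \<le> 1 + real n ^ (2 * k) + (real k * real m) ^ (2 * k)"
    unfolding M_def by (auto simp: max_def)
  also have "\<dots> \<le> real k ^ (2 * k) * (1 + real n ^ (2 * k) + real m ^ (2 * k))"
  proof -
    have kk: "1 \<le> real k ^ (2 * k)" using k by (simp add: one_le_power)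
    have "1 * (1 + real n ^ (2 * k)) \<le> real k ^ (2 * k) * (1 + real n ^ (2 * k))"
      by (rule mult_right_mono[OF kk]) simp
    hence "1 + real n ^ (2 * k) \<le> real k ^ (2 * k) * (1 + real n ^ (2 * k))" by simp
    thus ?thesis by (simp add: power_mult_distrib algebra_simps)
  qed
  finally show ?thesis by (simp add: cW_def wpq_def x power_mult_distrib mult.assoc)
qed

lemma wsq_diff:
  fixes w :: "'a \<Rightarrow> real"
  assumes w0: "\<And>x. 0 \<le> w x" and a: "(\<lambda>x. w x * (cmod (a x))\<^sup>2) summable_on UNIV" and b: "(\<lambda>x. w x * (cmod (b x))\<^sup>2) summable_on UNIV"
  shows "(\<lambda>x. w x * (cmod (a x - b x))\<^sup>2) summable_on UNIV"
proof (rule summable_on_comparison_test[OF summable_on_add[OF summable_on_cmult_right[OF a, of 2] summable_on_cmult_right[OF b, of 2]]])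
  fix x
  have "cmod (a x - b x) \<le> cmod (a x) + cmod (b x)" by (rule norm_triangle_ineq4)
  hence "(cmod (a x - b x))\<^sup>2 \<le> (cmod (a x) + cmod (b x))\<^sup>2" by (simp add: power_mono)
  also have "\<dots> \<le> 2 * (cmod (a x))\<^sup>2 + 2 * (cmod (b x))\<^sup>2"
    using sum_squares_ge_zero[of "cmod (a x) - cmod (b x)" 0] by (simp add: power2_eq_square algebra_simps)
  finally have "(cmod (a x - b x))\<^sup>2 \<le> 2 * (cmod (a x))\<^sup>2 + 2 * (cmod (b x))\<^sup>2" .
  hence "w x * (cmod (a x - b x))\<^sup>2 \<le> w x * (2 * (cmod (a x))\<^sup>2 + 2 * (cmod (b x))\<^sup>2)"
    using w0 by (intro mult_left_mono) auto
  thus "w x * (cmod (a x - b x))\<^sup>2 \<le> 2 * (w x * (cmod (a x))\<^sup>2) + 2 * (w x * (cmod (b x))\<^sup>2)"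
    by (simp add: algebra_simps)
  show "0 \<le> w x * (cmod (a x - b x))\<^sup>2" using w0 by simp
qed

lemma V_sub_D:
  assumes k: "k \<ge> 1" and s: "s \<in> Hpq (2 * k) (2 * k)"
  shows "s \<in> Hpq (2 * k) 2"
  unfolding Hpq_def mem_Collect_eq
proof (rule summable_on_comparison_test[OF summable_on_cmult_right[OF s[unfolded Hpq_def, simplified], of 2]])
  fix x :: "nat \<times> nat"
  obtain n m where x: "x = (n, m)" by fastforce
  have "(real m)\<^sup>2 \<le> 1 + real m ^ (2 * k)"
  proof (cases "m = 0")
    case False
    hence "real m ^ 2 \<le> real m ^ (2 * k)" using k by (intro power_increasing) auto
    thus ?thesis by simp
  qed simp
  moreover have "wpq (2 * k) 2 x = 1 + real n ^ (2 * k) + (real m)\<^sup>2" by (simp add: wpq_def x)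
  moreover have "wpq (2 * k) (2 * k) x = 1 + real n ^ (2 * k) + real m ^ (2 * k)" by (simp add: wpq_def x)
  moreover have "0 \<le> real n ^ (2 * k)" "0 \<le> real m ^ (2 * k)" by simp_all
  ultimately have "wpq (2 * k) 2 x \<le> 2 * wpq (2 * k) (2 * k) x" by linarith
  hence "wpq (2 * k) 2 x * (cmod (s x))\<^sup>2 \<le> (2 * wpq (2 * k) (2 * k) x) * (cmod (s x))\<^sup>2"
    by (rule mult_right_mono) simp
  thus "wpq (2 * k) 2 x * (cmod (s x))\<^sup>2 \<le> 2 * (wpq (2 * k) (2 * k) x * (cmod (s x))\<^sup>2)"
    by (simp add: mult.assoc)
  show "0 \<le> wpq (2 * k) 2 x * (cmod (s x))\<^sup>2" using wpq_ge1[of "2*k" 2 x] by simp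
qed

lemma Wt_summable:
  assumes k: "k \<ge> 1" and s: "s \<in> Hpq (2 * k) (2 * k)"
  shows "(\<lambda>x. Wt k x * (cmod (s x))\<^sup>2) summable_on UNIV"
proof (rule summable_on_comparison_test[OF summable_on_cmult_right[OF s[unfolded Hpq_def, simplified], of "cW k"]])
  fix x
  show "Wt k x * (cmod (s x))\<^sup>2 \<le> cW k * (wpq (2 * k) (2 * k) x * (cmod (s x))\<^sup>2)"
    using Wt_le_wpq[OF k, of x] by (simp add: mult_right_mono mult.assoc[symmetric])
  show "0 \<le> Wt k x * (cmod (s x))\<^sup>2" using Wt_nonneg[of k x] by simp
qed

lemma Wt_imp_V:
  assumes k: "k \<ge> 1" and s: "(\<lambda>x. Wt k x * (cmod (s x))\<^sup>2) summable_on UNIV"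
  shows "s \<in> Hpq (2 * k) (2 * k)"
  unfolding Hpq_def mem_Collect_eq
proof (rule summable_on_comparison_test[OF summable_on_cmult_right[OF s, of 3]], simp_all)
  fix x
  show "wpq (2 * k) (2 * k) x * (cmod (s x))\<^sup>2 \<le> 3 * (Wt k x * (cmod (s x))\<^sup>2)"
    using wpq_le_Wt[OF k, of x] by (simp add: mult_right_mono mult.assoc[symmetric])
  show "0 \<le> wpq (2 * k) (2 * k) x * (cmod (s x))\<^sup>2" using wpq_ge1[of "2*k" "2*k" x] by simp
qed

lemma V_diff:
  assumes k: "k \<ge> 1" and a: "a \<in> Hpq (2 * k) (2 * k)" and b: "b \<in> Hpq (2 * k) (2 * k)"
  shows "(\<lambda>x. a x - b x) \<in> Hpq (2 * k) (2 * k)"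
proof -
  have a': "(\<lambda>x. wpq (2 * k) (2 * k) x * (cmod (a x))\<^sup>2) summable_on UNIV" using a by (simp add: Hpq_def)
  have b': "(\<lambda>x. wpq (2 * k) (2 * k) x * (cmod (b x))\<^sup>2) summable_on UNIV" using b by (simp add: Hpq_def)
  have w0: "\<And>x. 0 \<le> wpq (2 * k) (2 * k) x" using wpq_ge1 order_trans zero_le_one by blast
  show ?thesis using wsq_diff[OF w0 a' b'] by (simp add: Hpq_def)
qed

lemma tail:
  assumes g: "(\<lambda>x. Wt k x * (cmod (s x))\<^sup>2) summable_on UNIV" and e: "0 < e"
  shows "\<exists>R\<ge>0. (\<Sum>\<^sub>\<infinity>x. (Wt k x - VRw k R x) * (cmod (s x))\<^sup>2) < e"
proof -
  define f where "f x = Wt k x * (cmod (s x))\<^sup>2" for x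
  have f0: "0 \<le> f x" for x using Wt_nonneg[of k x] by (simp add: f_def)
  have fs: "f summable_on UNIV" using g by (simp add: f_def[abs_def])
  obtain F where F: "finite F" and dF: "dist (sum f F) (infsum f UNIV) \<le> e / 2"
    using infsum_finite_approximation[OF fs, of "e/2"] e by auto
  define R where "R = (\<Sum>x\<in>F. Wt k x)"
  have R0: "0 \<le> R" unfolding R_def by (rule sum_nonneg) (simp add: Wt_nonneg)
  have RF: "x \<in> F \<Longrightarrow> Wt k x \<le> R" for x
    unfolding R_def by (rule member_le_sum) (auto simp: Wt_nonneg F)
  define g' where "g' x = (if x \<in> F then 0 else f x)" for x
  define g1 where "g1 x = (if x \<in> F then f x else 0)" for x
  have tb: "(Wt k x - VRw k R x) * (cmod (s x))\<^sup>2 \<le> g' x" for x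
  proof (cases "x \<in> F")
    case True thus ?thesis using RF[OF True] by (simp add: g'_def VRw_def)
  next
    case False
    have "(Wt k x - VRw k R x) * (cmod (s x))\<^sup>2 \<le> Wt k x * (cmod (s x))\<^sup>2"
      using R0 Wt_nonneg[of k x] by (intro mult_right_mono) (auto simp: VRw_def)
    thus ?thesis using False by (simp add: g'_def f_def)
  qed
  have tn: "0 \<le> (Wt k x - VRw k R x) * (cmod (s x))\<^sup>2" for x by (simp add: VRw_def)
  have g's: "g' summable_on UNIV"
    by (rule summable_on_comparison_test[OF fs]) (auto simp: g'_def f0)
  have g1s: "g1 summable_on UNIV"
    by (rule summable_on_comparison_test[OF fs]) (auto simp: g1_def f0)
  have ts: "(\<lambda>x. (Wt k x - VRw k R x) * (cmod (s x))\<^sup>2) summable_on UNIV"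
    by (rule summable_on_comparison_test[OF g's tb tn])
  have "infsum f UNIV = infsum (\<lambda>x. g1 x + g' x) UNIV" by (rule infsum_cong) (simp add: g1_def g'_def)
  also have "\<dots> = infsum g1 UNIV + infsum g' UNIV" by (rule infsum_add[OF g1s g's])
  also have "infsum g1 UNIV = infsum f F" by (rule infsum_cong_neutral) (auto simp: g1_def)
  also have "infsum f F = sum f F" using F by simp
  finally have eq: "infsum g' UNIV = infsum f UNIV - sum f F" by simp
  have "(\<Sum>\<^sub>\<infinity>x. (Wt k x - VRw k R x) * (cmod (s x))\<^sup>2) \<le> infsum g' UNIV"
    by (rule infsum_mono[OF ts g's tb])
  also have "\<dots> \<le> e / 2"
  proof -
    have "infsum f UNIV - sum f F \<le> \<bar>sum f F - infsum f UNIV\<bar>" by linarith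
    thus ?thesis using dF eq by (simp add: dist_real_def)
  qed
  also have "\<dots> < e" using e by simp
  finally show ?thesis using R0 by blast
qed

lemma infsum_diff_r:
  fixes f g :: "'a \<Rightarrow> real"
  assumes "f summable_on A" "g summable_on A"
  shows "infsum (\<lambda>x. f x - g x) A = infsum f A - infsum g A"
proof -
  have "infsum (\<lambda>x. f x + (- g x)) A = infsum f A + infsum (\<lambda>x. - g x) A"
    by (rule infsum_add[OF assms(1) summable_on_uminus[THEN iffD2, OF assms(2)]])
  thus ?thesis by (simp add: infsum_uminus)
qed

context SG begin

abbreviation "K' \<equiv> 2 * CL k \<alpha> \<kappa> + 1"

lemma K'_nonneg: "0 \<le> K'" using CL_nonneg by simp

lemma growthW:
  assumes \<psi>: "\<psi> \<in> Hpq (2 * k) (2 * k)" and t: "0 \<le> t"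
  shows "(\<lambda>x. Wt k x * (cmod (T t \<psi> x))\<^sup>2) summable_on UNIV"
    and "(\<Sum>\<^sub>\<infinity>x. Wt k x * (cmod (T t \<psi> x))\<^sup>2) \<le> (\<Sum>\<^sub>\<infinity>x. Wt k x * (cmod (\<psi> x))\<^sup>2) * exp (K' * t)"
proof -
  have \<psi>D: "\<psi> \<in> Hpq (2 * k) 2" by (rule V_sub_D[OF k1 \<psi>])
  have pH: "\<psi> \<in> Hspace" by (rule D_H[OF \<psi>D])
  have uH: "T t \<psi> \<in> Hspace" by (rule T_H[OF t pH])
  have gs: "(\<lambda>x. Wt k x * (cmod (\<psi> x))\<^sup>2) summable_on UNIV" by (rule Wt_summable[OF k1 \<psi>])
  define B where "B = (\<Sum>\<^sub>\<infinity>x. Wt k x * (cmod (\<psi> x))\<^sup>2) * exp (K' * t)"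
  have fin: "(\<Sum>x\<in>F. Wt k x * (cmod (T t \<psi> x))\<^sup>2) \<le> B" if F: "finite F" for F
  proof -
    define R where "R = (\<Sum>x\<in>F. Wt k x)"
    have R0: "0 \<le> R" unfolding R_def by (rule sum_nonneg) (simp add: Wt_nonneg)
    note VW = Vw_inst[OF k1 R0]
    have V0: "\<And>x. 0 \<le> VRw k R x" and VR: "\<And>x. VRw k R x \<le> R" using Vweight.V0[OF VW] Vweight.VR[OF VW] by auto
    have "(\<Sum>x\<in>F. Wt k x * (cmod (T t \<psi> x))\<^sup>2) = (\<Sum>x\<in>F. VRw k R x * (cmod (T t \<psi> x))\<^sup>2)"
    proof (rule sum.cong)
      fix x assume "x \<in> F"
      hence "Wt k x \<le> R" unfolding R_def by (intro member_le_sum) (auto simp: Wt_nonneg F)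
      thus "Wt k x * (cmod (T t \<psi> x))\<^sup>2 = VRw k R x * (cmod (T t \<psi> x))\<^sup>2" by (simp add: VRw_def)
    qed simp
    also have "\<dots> \<le> (\<Sum>\<^sub>\<infinity>x. VRw k R x * (cmod (T t \<psi> x))\<^sup>2)"
      by (rule sum_le_infsum_nonneg[OF wV_summable[OF V0 VR uH] _ F]) (simp add: V0)
    also have "\<dots> \<le> (\<Sum>\<^sub>\<infinity>x. VRw k R x * (cmod (\<psi> x))\<^sup>2) * exp ((2 * CL k \<alpha> \<kappa> + 1) * t)"
      by (rule growth[OF VW \<psi>D t])
    also have "\<dots> \<le> B" unfolding B_def
      by (intro mult_right_mono infsum_mono[OF wV_summable[OF V0 VR pH] gs])
         (auto simp: VRw_def intro: mult_right_mono)
    finally show ?thesis .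
  qed
  show sm: "(\<lambda>x. Wt k x * (cmod (T t \<psi> x))\<^sup>2) summable_on UNIV"
  proof (rule nonneg_bdd_above_summable_on)
    show "bdd_above (sum (\<lambda>x. Wt k x * (cmod (T t \<psi> x))\<^sup>2) ` {F. F \<subseteq> UNIV \<and> finite F})"
      using fin by (intro bdd_aboveI2[of _ _ B]) auto
  qed (simp add: Wt_nonneg)
  show "(\<Sum>\<^sub>\<infinity>x. Wt k x * (cmod (T t \<psi> x))\<^sup>2) \<le> (\<Sum>\<^sub>\<infinity>x. Wt k x * (cmod (\<psi> x))\<^sup>2) * exp (K' * t)"
    using infsum_le_finite_sums[OF sm fin] by (simp add: B_def)
qed

lemma invariant:
  assumes \<psi>: "\<psi> \<in> Hpq (2 * k) (2 * k)" and t: "0 \<le> t"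
  shows "T t \<psi> \<in> Hpq (2 * k) (2 * k)"
  by (rule Wt_imp_V[OF k1 growthW(1)[OF \<psi> t]])

end

context SG begin

lemma Econv:
  assumes \<psi>: "\<psi> \<in> Hpq (2 * k) (2 * k)"
  shows "((\<lambda>h. \<Sum>\<^sub>\<infinity>x. Wt k x * (cmod (T h \<psi> x - \<psi> x))\<^sup>2) \<longlongrightarrow> 0) (at_right 0)"
proof (rule order_tendstoI)
  fix a :: real assume "a < 0"
  thus "\<forall>\<^sub>F h in at_right 0. a < (\<Sum>\<^sub>\<infinity>x. Wt k x * (cmod (T h \<psi> x - \<psi> x))\<^sup>2)"
    by (intro always_eventually allI, rule less_le_trans[OF _ infsum_nonneg]) (auto simp: Wt_nonneg)
next
  fix a :: real assume a: "0 < a"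
  have \<psi>D: "\<psi> \<in> Hpq (2 * k) 2" by (rule V_sub_D[OF k1 \<psi>])
  have pH: "\<psi> \<in> Hspace" by (rule D_H[OF \<psi>D])
  have gs: "(\<lambda>x. Wt k x * (cmod (\<psi> x))\<^sup>2) summable_on UNIV" by (rule Wt_summable[OF k1 \<psi>])
  obtain R where R0: "0 \<le> R" and tl: "(\<Sum>\<^sub>\<infinity>x. (Wt k x - VRw k R x) * (cmod (\<psi> x))\<^sup>2) < a / 8"
    using tail[OF gs, of "a / 8"] a by auto
  define tailR where "tailR = (\<Sum>\<^sub>\<infinity>x. (Wt k x - VRw k R x) * (cmod (\<psi> x))\<^sup>2)"
  define W where "W = (\<Sum>\<^sub>\<infinity>x. Wt k x * (cmod (\<psi> x))\<^sup>2)"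
  note VW = Vw_inst[OF k1 R0]
  have V0: "\<And>x. 0 \<le> VRw k R x" and VR: "\<And>x. VRw k R x \<le> R" using Vweight.V0[OF VW] Vweight.VR[OF VW] by auto
  have VW_le: "\<And>x. VRw k R x \<le> Wt k x" by (simp add: VRw_def)
  define U where "U h = R * (Hnorm (\<lambda>x. T h \<psi> x - \<psi> x))\<^sup>2 + 2 * (W * exp (K' * h) - (\<Sum>\<^sub>\<infinity>x. VRw k R x * (cmod (T h \<psi> x))\<^sup>2)) + 2 * tailR" for h
  have sub: "{0<..} \<subseteq> {0::real..}" by auto
  have lim1: "((\<lambda>h. Hnorm (\<lambda>x. T h \<psi> x - \<psi> x)) \<longlongrightarrow> 0) (at_right 0)"
    using tendsto_within_subset[OF T_cont[OF pH order_refl] sub] T_0[OF pH] by simp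
  have lim2: "((\<lambda>h. \<Sum>\<^sub>\<infinity>x. VRw k R x * (cmod (T h \<psi> x))\<^sup>2) \<longlongrightarrow> (\<Sum>\<^sub>\<infinity>x. VRw k R x * (cmod (\<psi> x))\<^sup>2)) (at_right 0)"
  proof -
    have "((\<lambda>h. \<Sum>\<^sub>\<infinity>x. VRw k R x * (cmod (T h \<psi> x))\<^sup>2) \<longlongrightarrow> (\<Sum>\<^sub>\<infinity>x. VRw k R x * (cmod (T 0 \<psi> x))\<^sup>2)) (at 0 within {0..})"
      using Fv_cont[OF V0 VR pH] unfolding continuous_on_def by auto
    thus ?thesis using tendsto_within_subset[OF _ sub] T_0[OF pH] by simp
  qed
  have lim3: "((\<lambda>h. exp (K' * h)) \<longlongrightarrow> exp (K' * 0)) (at_right 0)"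
    by (rule tendsto_exp[OF tendsto_mult[OF tendsto_const tendsto_ident_at]])
  have "(U \<longlongrightarrow> R * 0\<^sup>2 + 2 * (W * exp (K' * 0) - (\<Sum>\<^sub>\<infinity>x. VRw k R x * (cmod (\<psi> x))\<^sup>2)) + 2 * tailR) (at_right 0)"
    unfolding U_def[abs_def]
    by (rule tendsto_add[OF tendsto_add[OF tendsto_mult[OF tendsto_const tendsto_power[OF lim1]]
             tendsto_mult[OF tendsto_const tendsto_diff[OF tendsto_mult[OF tendsto_const lim3] lim2]]] tendsto_const])
  moreover have "W - (\<Sum>\<^sub>\<infinity>x. VRw k R x * (cmod (\<psi> x))\<^sup>2) = tailR"
  proof -
    have "tailR = (\<Sum>\<^sub>\<infinity>x. Wt k x * (cmod (\<psi> x))\<^sup>2 - VRw k R x * (cmod (\<psi> x))\<^sup>2)"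
      unfolding tailR_def by (rule infsum_cong) (simp add: algebra_simps)
    also have "\<dots> = W - (\<Sum>\<^sub>\<infinity>x. VRw k R x * (cmod (\<psi> x))\<^sup>2)"
      unfolding W_def by (rule infsum_diff_r[OF gs wV_summable[OF V0 VR pH]])
    finally show ?thesis by simp
  qed
  ultimately have UL: "(U \<longlongrightarrow> 4 * tailR) (at_right 0)" by simp
  have "4 * tailR < a" using tl a by (simp add: tailR_def)
  hence evU: "eventually (\<lambda>h. U h < a \<and> 0 < h) (at_right 0)"
    using order_tendstoD(2)[OF UL] eventually_at_right_less by (intro eventually_conj) auto
  show "\<forall>\<^sub>F h in at_right 0. (\<Sum>\<^sub>\<infinity>x. Wt k x * (cmod (T h \<psi> x - \<psi> x))\<^sup>2) < a"
  proof (rule eventually_mono[OF evU])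
    fix h :: real assume hh: "U h < a \<and> 0 < h"
    hence h: "0 < h" and Uh: "U h < a" by auto
    define u where "u = T h \<psi>"
    have uV: "u \<in> Hpq (2 * k) (2 * k)" unfolding u_def using invariant[OF \<psi>] h by simp
    have uH: "u \<in> Hspace" unfolding u_def using T_H[OF _ pH, of h] h by simp
    have dH: "(\<lambda>x. u x - \<psi> x) \<in> Hspace" by (rule Hspace_diff[OF uH pH])
    have us: "(\<lambda>x. Wt k x * (cmod (u x))\<^sup>2) summable_on UNIV" unfolding u_def using growthW(1)[OF \<psi>, of h] h by simp
    have ds: "(\<lambda>x. Wt k x * (cmod (u x - \<psi> x))\<^sup>2) summable_on UNIV"
      by (rule Wt_summable[OF k1 V_diff[OF k1 uV \<psi>]])
    have s1: "(\<lambda>x. VRw k R x * (cmod (u x - \<psi> x))\<^sup>2) summable_on UNIV" by (rule wV_summable[OF V0 VR dH])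
    have s2: "(\<lambda>x. (Wt k x - VRw k R x) * (cmod (u x))\<^sup>2) summable_on UNIV"
    proof (rule summable_on_comparison_test[OF us])
    fix x
    show "(Wt k x - VRw k R x) * (cmod (u x))\<^sup>2 \<le> Wt k x * (cmod (u x))\<^sup>2" using V0[of x] by (intro mult_right_mono) auto
    show "0 \<le> (Wt k x - VRw k R x) * (cmod (u x))\<^sup>2" by (simp add: VRw_def)
  qed
    have s3: "(\<lambda>x. (Wt k x - VRw k R x) * (cmod (\<psi> x))\<^sup>2) summable_on UNIV"
    proof (rule summable_on_comparison_test[OF gs])
    fix x
    show "(Wt k x - VRw k R x) * (cmod (\<psi> x))\<^sup>2 \<le> Wt k x * (cmod (\<psi> x))\<^sup>2" using V0[of x] by (intro mult_right_mono) auto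
    show "0 \<le> (Wt k x - VRw k R x) * (cmod (\<psi> x))\<^sup>2" by (simp add: VRw_def)
  qed
    have "(\<Sum>\<^sub>\<infinity>x. Wt k x * (cmod (u x - \<psi> x))\<^sup>2) \<le>
          (\<Sum>\<^sub>\<infinity>x. VRw k R x * (cmod (u x - \<psi> x))\<^sup>2 + 2 * ((Wt k x - VRw k R x) * (cmod (u x))\<^sup>2) + 2 * ((Wt k x - VRw k R x) * (cmod (\<psi> x))\<^sup>2))"
    proof (rule infsum_mono[OF ds])
      show "(\<lambda>x. VRw k R x * (cmod (u x - \<psi> x))\<^sup>2 + 2 * ((Wt k x - VRw k R x) * (cmod (u x))\<^sup>2) + 2 * ((Wt k x - VRw k R x) * (cmod (\<psi> x))\<^sup>2)) summable_on UNIV"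
        by (intro summable_on_add summable_on_cmult_right s1 s2 s3)
      fix x
      have d2: "(cmod (u x - \<psi> x))\<^sup>2 \<le> 2 * (cmod (u x))\<^sup>2 + 2 * (cmod (\<psi> x))\<^sup>2"
      proof -
        have "cmod (u x - \<psi> x) \<le> cmod (u x) + cmod (\<psi> x)" by (rule norm_triangle_ineq4)
        hence "(cmod (u x - \<psi> x))\<^sup>2 \<le> (cmod (u x) + cmod (\<psi> x))\<^sup>2" by (simp add: power_mono)
        also have "\<dots> \<le> 2 * (cmod (u x))\<^sup>2 + 2 * (cmod (\<psi> x))\<^sup>2"
          using sum_squares_ge_zero[of "cmod (u x) - cmod (\<psi> x)" 0] by (simp add: power2_eq_square algebra_simps)
        finally show ?thesis .
      qed
      have nn: "0 \<le> Wt k x - VRw k R x" by (simp add: VRw_def)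
      have "Wt k x * (cmod (u x - \<psi> x))\<^sup>2 = VRw k R x * (cmod (u x - \<psi> x))\<^sup>2 + (Wt k x - VRw k R x) * (cmod (u x - \<psi> x))\<^sup>2"
        by (simp add: algebra_simps)
      also have "(Wt k x - VRw k R x) * (cmod (u x - \<psi> x))\<^sup>2 \<le> (Wt k x - VRw k R x) * (2 * (cmod (u x))\<^sup>2 + 2 * (cmod (\<psi> x))\<^sup>2)"
        by (rule mult_left_mono[OF d2 nn])
      finally show "Wt k x * (cmod (u x - \<psi> x))\<^sup>2 \<le> VRw k R x * (cmod (u x - \<psi> x))\<^sup>2 + 2 * ((Wt k x - VRw k R x) * (cmod (u x))\<^sup>2) + 2 * ((Wt k x - VRw k R x) * (cmod (\<psi> x))\<^sup>2)"
        by (simp add: algebra_simps)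
    qed
    also have "\<dots> = (\<Sum>\<^sub>\<infinity>x. VRw k R x * (cmod (u x - \<psi> x))\<^sup>2) + 2 * (\<Sum>\<^sub>\<infinity>x. (Wt k x - VRw k R x) * (cmod (u x))\<^sup>2) + 2 * tailR"
      unfolding tailR_def
      by (subst infsum_add, intro summable_on_add summable_on_cmult_right s1 s2, intro summable_on_cmult_right s3,
          subst infsum_add, rule s1, intro summable_on_cmult_right s2, simp only: infsum_cmult_right')
    also have "(\<Sum>\<^sub>\<infinity>x. VRw k R x * (cmod (u x - \<psi> x))\<^sup>2) \<le> R * (Hnorm (\<lambda>x. u x - \<psi> x))\<^sup>2"
      by (rule wV_le[OF V0 VR dH])
    also have "(\<Sum>\<^sub>\<infinity>x. (Wt k x - VRw k R x) * (cmod (u x))\<^sup>2) \<le> W * exp (K' * h) - (\<Sum>\<^sub>\<infinity>x. VRw k R x * (cmod (u x))\<^sup>2)"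
    proof -
      have "(\<Sum>\<^sub>\<infinity>x. (Wt k x - VRw k R x) * (cmod (u x))\<^sup>2) = (\<Sum>\<^sub>\<infinity>x. Wt k x * (cmod (u x))\<^sup>2 - VRw k R x * (cmod (u x))\<^sup>2)"
        by (rule infsum_cong) (simp add: algebra_simps)
      also have "\<dots> = (\<Sum>\<^sub>\<infinity>x. Wt k x * (cmod (u x))\<^sup>2) - (\<Sum>\<^sub>\<infinity>x. VRw k R x * (cmod (u x))\<^sup>2)"
        by (rule infsum_diff_r[OF us wV_summable[OF V0 VR uH]])
      also have "(\<Sum>\<^sub>\<infinity>x. Wt k x * (cmod (u x))\<^sup>2) \<le> W * exp (K' * h)"
        unfolding u_def W_def using growthW(2)[OF \<psi>, of h] h by simp
      finally show ?thesis by simp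
    qed
    finally have "(\<Sum>\<^sub>\<infinity>x. Wt k x * (cmod (u x - \<psi> x))\<^sup>2) \<le> U h"
      by (simp add: U_def u_def)
    thus "(\<Sum>\<^sub>\<infinity>x. Wt k x * (cmod (T h \<psi> x - \<psi> x))\<^sup>2) < a" using Uh by (simp add: u_def)
  qed
qed

end

context SG begin

lemma Vnorm_sq: "s \<in> Hpq (2 * k) (2 * k) \<Longrightarrow> (Hpq_norm (2 * k) (2 * k) s)\<^sup>2 = (\<Sum>\<^sub>\<infinity>x. wpq (2 * k) (2 * k) x * (cmod (s x))\<^sup>2)"
  by (simp add: Hpq_norm_def wsum_def infsum_nonneg wpq_def)

lemma Vnorm_le_Wt:
  assumes s: "s \<in> Hpq (2 * k) (2 * k)"
  shows "(\<Sum>\<^sub>\<infinity>x. wpq (2 * k) (2 * k) x * (cmod (s x))\<^sup>2) \<le> 3 * (\<Sum>\<^sub>\<infinity>x. Wt k x * (cmod (s x))\<^sup>2)"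
proof -
  have "(\<Sum>\<^sub>\<infinity>x. wpq (2 * k) (2 * k) x * (cmod (s x))\<^sup>2) \<le> (\<Sum>\<^sub>\<infinity>x. 3 * (Wt k x * (cmod (s x))\<^sup>2))"
  proof (rule infsum_mono)
    show "(\<lambda>x. wpq (2 * k) (2 * k) x * (cmod (s x))\<^sup>2) summable_on UNIV" using s by (simp add: Hpq_def)
    show "(\<lambda>x. 3 * (Wt k x * (cmod (s x))\<^sup>2)) summable_on UNIV" by (intro summable_on_cmult_right Wt_summable[OF k1 s])
    fix x show "wpq (2 * k) (2 * k) x * (cmod (s x))\<^sup>2 \<le> 3 * (Wt k x * (cmod (s x))\<^sup>2)"
      using wpq_le_Wt[OF k1, of x] by (simp add: mult_right_mono mult.assoc[symmetric])
  qed
  thus ?thesis by (simp add: infsum_cmult_right')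
qed

lemma Wt_le_Vnorm:
  assumes s: "s \<in> Hpq (2 * k) (2 * k)"
  shows "(\<Sum>\<^sub>\<infinity>x. Wt k x * (cmod (s x))\<^sup>2) \<le> cW k * (\<Sum>\<^sub>\<infinity>x. wpq (2 * k) (2 * k) x * (cmod (s x))\<^sup>2)"
proof -
  have "(\<Sum>\<^sub>\<infinity>x. Wt k x * (cmod (s x))\<^sup>2) \<le> (\<Sum>\<^sub>\<infinity>x. cW k * (wpq (2 * k) (2 * k) x * (cmod (s x))\<^sup>2))"
  proof (rule infsum_mono)
    show "(\<lambda>x. cW k * (wpq (2 * k) (2 * k) x * (cmod (s x))\<^sup>2)) summable_on UNIV" using s
      by (intro summable_on_cmult_right) (simp add: Hpq_def)
    show "(\<lambda>x. Wt k x * (cmod (s x))\<^sup>2) summable_on UNIV" by (rule Wt_summable[OF k1 s])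
    fix x show "Wt k x * (cmod (s x))\<^sup>2 \<le> cW k * (wpq (2 * k) (2 * k) x * (cmod (s x))\<^sup>2)"
      using Wt_le_wpq[OF k1, of x] by (simp add: mult_right_mono mult.assoc[symmetric])
  qed
  thus ?thesis by (simp add: infsum_cmult_right')
qed

lemma Vnorm_nonneg: "0 \<le> Hpq_norm p q s"
proof -
  have "0 \<le> wsum (wpq p q) s" unfolding wsum_def
  proof (rule infsum_nonneg)
    fix x have "0 \<le> wpq p q x" using wpq_ge1[of p q x] by linarith
    thus "0 \<le> wpq p q x * (cmod (s x))\<^sup>2" by simp
  qed
  thus ?thesis by (simp add: Hpq_norm_def)
qed

lemma Wsum_nonneg: "0 \<le> (\<Sum>\<^sub>\<infinity>x. Wt k x * (cmod (s x))\<^sup>2)"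
  by (rule infsum_nonneg) (simp add: Wt_nonneg)

lemma bound_clause:
  assumes t: "0 \<le> t"
  shows "\<exists>C. \<forall>\<psi>\<in>Hpq (2 * k) (2 * k). Hpq_norm (2 * k) (2 * k) (T t \<psi>) \<le> C * Hpq_norm (2 * k) (2 * k) \<psi>"
proof (intro exI ballI)
  fix \<psi> assume \<psi>: "\<psi> \<in> Hpq (2 * k) (2 * k)"
  define c where "c = 3 * exp (K' * t) * cW k"
  have c0: "0 \<le> c" by (simp add: c_def cW_def)
  have uV: "T t \<psi> \<in> Hpq (2 * k) (2 * k)" by (rule invariant[OF \<psi> t])
  have "(Hpq_norm (2 * k) (2 * k) (T t \<psi>))\<^sup>2 \<le> 3 * (\<Sum>\<^sub>\<infinity>x. Wt k x * (cmod (T t \<psi> x))\<^sup>2)"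
    unfolding Vnorm_sq[OF uV] by (rule Vnorm_le_Wt[OF uV])
  also have "\<dots> \<le> 3 * ((\<Sum>\<^sub>\<infinity>x. Wt k x * (cmod (\<psi> x))\<^sup>2) * exp (K' * t))"
    using growthW(2)[OF \<psi> t] by simp
  also have "\<dots> \<le> 3 * ((cW k * (\<Sum>\<^sub>\<infinity>x. wpq (2 * k) (2 * k) x * (cmod (\<psi> x))\<^sup>2)) * exp (K' * t))"
    using mult_right_mono[OF Wt_le_Vnorm[OF \<psi>], of "exp (K' * t)"] by simp
  also have "\<dots> = c * (Hpq_norm (2 * k) (2 * k) \<psi>)\<^sup>2"
    unfolding Vnorm_sq[OF \<psi>] c_def by (simp only: mult_ac)
  also have "\<dots> = (sqrt c * Hpq_norm (2 * k) (2 * k) \<psi>)\<^sup>2"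
    using c0 by (simp only: power_mult_distrib real_sqrt_pow2)
  finally have sq: "(Hpq_norm (2 * k) (2 * k) (T t \<psi>))\<^sup>2 \<le> (sqrt c * Hpq_norm (2 * k) (2 * k) \<psi>)\<^sup>2" .
  have "0 \<le> sqrt c * Hpq_norm (2 * k) (2 * k) \<psi>" using Vnorm_nonneg[of "2*k" "2*k" \<psi>] c0 by simp
  thus "Hpq_norm (2 * k) (2 * k) (T t \<psi>) \<le> sqrt c * Hpq_norm (2 * k) (2 * k) \<psi>"
    by (rule power2_le_imp_le[OF sq])
qed

lemma diff_bound:
  assumes \<psi>: "\<psi> \<in> Hpq (2 * k) (2 * k)" and t: "0 \<le> t" and s: "0 \<le> s"
  shows "(\<Sum>\<^sub>\<infinity>x. Wt k x * (cmod (T s \<psi> x - T t \<psi> x))\<^sup>2)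
     \<le> exp (K' * t) * (\<Sum>\<^sub>\<infinity>x. Wt k x * (cmod (T \<bar>s - t\<bar> \<psi> x - \<psi> x))\<^sup>2)"
proof -
  have pH: "\<psi> \<in> Hspace" by (rule D_H[OF V_sub_D[OF k1 \<psi>]])
  have E0: "0 \<le> (\<Sum>\<^sub>\<infinity>x. Wt k x * (cmod (T \<bar>s - t\<bar> \<psi> x - \<psi> x))\<^sup>2)" by (rule Wsum_nonneg)
  show ?thesis
  proof (cases "t \<le> s")
    case True
    define \<phi> where "\<phi> = (\<lambda>x. T (s - t) \<psi> x - \<psi> x)"
    have \<phi>V: "\<phi> \<in> Hpq (2 * k) (2 * k)" unfolding \<phi>_def using True by (intro V_diff[OF k1 invariant[OF \<psi>] \<psi>]) auto
    have "T s \<psi> = T t (T (s - t) \<psi>)" using T_semi[OF t _ pH, of "s - t"] True by simp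
    hence "(\<lambda>x. T s \<psi> x - T t \<psi> x) = T t \<phi>"
      unfolding \<phi>_def using T_diff[OF t T_H[OF _ pH, of "s - t"] pH] True by simp
    hence "(\<Sum>\<^sub>\<infinity>x. Wt k x * (cmod (T s \<psi> x - T t \<psi> x))\<^sup>2) = (\<Sum>\<^sub>\<infinity>x. Wt k x * (cmod (T t \<phi> x))\<^sup>2)"
      by (metis (no_types))
    also have "\<dots> \<le> (\<Sum>\<^sub>\<infinity>x. Wt k x * (cmod (\<phi> x))\<^sup>2) * exp (K' * t)" by (rule growthW(2)[OF \<phi>V t])
    finally show ?thesis using True by (simp add: \<phi>_def mult.commute)
  next
    case False
    define \<phi> where "\<phi> = (\<lambda>x. T (t - s) \<psi> x - \<psi> x)"
    have \<phi>V: "\<phi> \<in> Hpq (2 * k) (2 * k)" unfolding \<phi>_def using False by (intro V_diff[OF k1 invariant[OF \<psi>] \<psi>]) auto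
    have "T t \<psi> = T s (T (t - s) \<psi>)" using T_semi[OF s _ pH, of "t - s"] False by simp
    hence eq: "(\<lambda>x. T t \<psi> x - T s \<psi> x) = T s \<phi>"
      unfolding \<phi>_def using T_diff[OF s T_H[OF _ pH, of "t - s"] pH] False by simp
    have "(\<Sum>\<^sub>\<infinity>x. Wt k x * (cmod (T s \<psi> x - T t \<psi> x))\<^sup>2) = (\<Sum>\<^sub>\<infinity>x. Wt k x * (cmod (T s \<phi> x))\<^sup>2)"
    proof (rule infsum_cong)
      fix x
      have "T s \<phi> x = T t \<psi> x - T s \<psi> x" using eq by metis
      thus "Wt k x * (cmod (T s \<psi> x - T t \<psi> x))\<^sup>2 = Wt k x * (cmod (T s \<phi> x))\<^sup>2" by (simp add: norm_minus_commute)
    qed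
    also have "\<dots> \<le> (\<Sum>\<^sub>\<infinity>x. Wt k x * (cmod (\<phi> x))\<^sup>2) * exp (K' * s)" by (rule growthW(2)[OF \<phi>V s])
    also have "\<dots> \<le> (\<Sum>\<^sub>\<infinity>x. Wt k x * (cmod (\<phi> x))\<^sup>2) * exp (K' * t)"
      using False K'_nonneg Wsum_nonneg by (intro mult_left_mono) (auto intro: mult_left_mono)
    finally show ?thesis using False by (simp add: \<phi>_def mult.commute)
  qed
qed

lemma cont_clause:
  assumes \<psi>: "\<psi> \<in> Hpq (2 * k) (2 * k)" and t: "0 \<le> t"
  shows "((\<lambda>s. Hpq_norm (2 * k) (2 * k) (\<lambda>x. T s \<psi> x - T t \<psi> x)) \<longlongrightarrow> 0) (at t within {0..})"
proof (rule tendstoI)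
  fix e :: real assume e: "0 < e"
  define c where "c = 3 * exp (K' * t)"
  have c0: "0 < c" by (simp add: c_def)
  have "eventually (\<lambda>h. (\<Sum>\<^sub>\<infinity>x. Wt k x * (cmod (T h \<psi> x - \<psi> x))\<^sup>2) < e\<^sup>2 / c) (at_right 0)"
    by (rule order_tendstoD(2)[OF Econv[OF \<psi>]]) (use e c0 in simp)
  then obtain b where b0: "0 < b" and bb: "\<And>h. 0 < h \<Longrightarrow> h < b \<Longrightarrow> (\<Sum>\<^sub>\<infinity>x. Wt k x * (cmod (T h \<psi> x - \<psi> x))\<^sup>2) < e\<^sup>2 / c"
    unfolding eventually_at_right_field by auto
  show "\<forall>\<^sub>F s in at t within {0..}. dist (Hpq_norm (2 * k) (2 * k) (\<lambda>x. T s \<psi> x - T t \<psi> x)) 0 < e"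
    unfolding eventually_at
  proof (intro exI[of _ b] conjI b0 ballI impI)
    fix s :: real assume s: "s \<in> {0..}" and st: "s \<noteq> t \<and> dist s t < b"
    have s0: "0 \<le> s" using s by simp
    have hpos: "0 < \<bar>s - t\<bar>" and hb: "\<bar>s - t\<bar> < b" using st by (auto simp: dist_real_def)
    have dV: "(\<lambda>x. T s \<psi> x - T t \<psi> x) \<in> Hpq (2 * k) (2 * k)"
      by (rule V_diff[OF k1 invariant[OF \<psi> s0] invariant[OF \<psi> t]])
    have "(Hpq_norm (2 * k) (2 * k) (\<lambda>x. T s \<psi> x - T t \<psi> x))\<^sup>2 \<le> 3 * (\<Sum>\<^sub>\<infinity>x. Wt k x * (cmod (T s \<psi> x - T t \<psi> x))\<^sup>2)"
      unfolding Vnorm_sq[OF dV] by (rule Vnorm_le_Wt[OF dV])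
    also have "\<dots> \<le> 3 * (exp (K' * t) * (\<Sum>\<^sub>\<infinity>x. Wt k x * (cmod (T \<bar>s - t\<bar> \<psi> x - \<psi> x))\<^sup>2))"
      using diff_bound[OF \<psi> t s0] by simp
    also have "\<dots> = c * (\<Sum>\<^sub>\<infinity>x. Wt k x * (cmod (T \<bar>s - t\<bar> \<psi> x - \<psi> x))\<^sup>2)" by (simp add: c_def)
    also have "\<dots> < c * (e\<^sup>2 / c)" using bb[OF hpos hb] c0 by (intro mult_strict_left_mono) auto
    also have "\<dots> = e\<^sup>2" using c0 by simp
    finally have "(Hpq_norm (2 * k) (2 * k) (\<lambda>x. T s \<psi> x - T t \<psi> x))\<^sup>2 < e\<^sup>2" .
    hence "Hpq_norm (2 * k) (2 * k) (\<lambda>x. T s \<psi> x - T t \<psi> x) < e"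
      using e Vnorm_nonneg by (simp add: power2_less_imp_less)
    thus "dist (Hpq_norm (2 * k) (2 * k) (\<lambda>x. T s \<psi> x - T t \<psi> x)) 0 < e"
      using Vnorm_nonneg by (simp add: dist_real_def)
  qed
qed

end

theorem lemma5:
  fixes k :: nat and \<alpha> \<kappa> :: real and T :: "real \<Rightarrow> fock \<Rightarrow> fock"
  assumes "k \<ge> 1" and "\<kappa> > 0"
    and "C0_contraction_semigroup T"
    and "generator_graph T (closure_graph (Hpq (2 * k) 2) (op_G k \<alpha> \<kappa>))"
  shows "admissible_restriction T (Hpq (2 * k) (2 * k)) (Hpq_norm (2 * k) (2 * k))"
proof -
  interpret SG k \<alpha> \<kappa> T by (rule SG.intro) (fact assms)+
  show ?thesis
    unfolding admissible_restriction_def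
  proof (intro conjI allI impI ballI)
    fix t :: real and \<psi> assume "0 \<le> t" "\<psi> \<in> Hpq (2 * k) (2 * k)"
    thus "T t \<psi> \<in> Hpq (2 * k) (2 * k)" by (intro invariant)
  next
    fix t :: real assume "0 \<le> t"
    thus "\<exists>C. \<forall>\<psi>\<in>Hpq (2 * k) (2 * k). Hpq_norm (2 * k) (2 * k) (T t \<psi>) \<le> C * Hpq_norm (2 * k) (2 * k) \<psi>"
      by (rule bound_clause)
  next
    fix t :: real and \<psi> assume "\<psi> \<in> Hpq (2 * k) (2 * k)" "0 \<le> t"
    thus "((\<lambda>s. Hpq_norm (2 * k) (2 * k) (\<lambda>x. T s \<psi> x - T t \<psi> x)) \<longlongrightarrow> 0) (at t within {0..})"
      by (intro cont_clause)
  qed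
qed


end
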